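(* Let $p$ be an odd prime, $k\ge2$ and $s=k+2$. Put $S=\sum_{j=0}^{k-1}p^j$ and $C=2(k+1)p^{k+1}-1$. For $0\le l<p^k$, the $p^k$-Fibonacci number of $V_{s,l}$ is as follows. (a) If $l=0$: $\mathcal M_{V_{s,l}}=\frac{p-1}{2}\,C$. (b) If $0\le i\le k-2$, $1\le t\le p-1$ and $(t-1)\sum_{\iota=i}^{k-1}p^\iota+p^i\le l\le (t-1)\sum_{\iota=i+1}^{k-1}p^\iota+p^{i+1}-1$: $\mathcal M_{V_{s,l}}=\frac{p-1}{2}\big(C+2tS-2\sum_{\mu=0}^{k-i-2}p^\mu\big)$ if $1\le t\le\frac{p-1}{2}$, and $\mathcal M_{V_{s,l}}=\frac{p-1}{2}\big(C+(2t-2p)S-2\sum_{\mu=0}^{k-i-2}p^\mu\big)$ if $\frac{p+1}{2}\le t\le p-1$. (c) If $1\le t\le p-1$, $t\neq\frac{p-1}{2}$, and $tp^{k-1}\le l\le tS$: $\mathcal M_{V_{s,l}}=\frac{p-1}{2}(C+2tS)$ if $1\le t\le\frac{p-3}{2}$, and $\mathcal M_{V_{s,l}}=\frac{p-1}{2}(C+(2t-2p)S)$ if $\frac{p+1}{2}\le t\le p-1$. (d) If $1\le i'\le k-1$ and $\frac{p-1}{2}\sum_{\iota=i'}^{k-1}p^\iota\le l\le\frac{p-1}{2}\sum_{\iota=i'-1}^{k-1}p^\iota-1$: $\mathcal M_{V_{s,l}}=\frac{p-1}{2}\Big(C-p^k-2\sum_{\theta=1}^{k-1}p^\theta+2\sum_{\mu=k-i'+1}^{k}p^\mu-1\Big)$.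 (e) If $l=\frac{p-1}{2}S$: $\mathcal M_{V_{s,l}}=\frac{p-1}{2}\Big(C-p^k-2\sum_{\theta=1}^{k-1}p^\theta-1\Big)$.
   Context: Fix an odd prime $p$ and an integer $k\ge 0$. For integers $0\le i<n$ write $\lambda(n,i)=(n-i,1^i)$ for the hook partition of $n$ with $n-i$ boxes in its first row and $i$ further boxes in its first column. If $\mu=\lambda(n',i')$ is obtained from $\lambda(n,i)$ by appending $m=(n'-i')-(n-i)\ge 0$ boxes to the first row and $n''=i'-i\ge 0$ boxes to the first column, we say $\mu$ is obtained by adding the block $B_{m,n''}$ ($m$ horizontal nodes, $n''$ vertical nodes). Put $x_s=p^k(sp-(s+1))$. The relevant part ("column $k$") of the $p$-Bratteli diagram is the graded directed graph with vertices: on floor $2k+1$, $S_i=\lambda(p^k(p-1),i)$ for $0\le i<p^k(p-1)$; on floor $2(k+s)$ ($s\ge1$), $V_{s,l}=\lambda\big(p^k(2sp-(2s+1)),\,x_s+l\big)$ for $0\le l<p^k$; on floor $2(k+s)-1$ ($s\ge2$), $W_{s,l'}=\lambda\big(p^k((2s-1)p-2s),\,x_{s-1}+l'\big)$ for $0\le l'<p^{k+1}$; and edges, each labelled by the block added: (E1) $S_i\to V_{1,l}$ exactly when $i=p^kt+l$ with $0\le t\le p-2$, block $B_{p^kt,\,p^k(p-2-t)}$; (E2) for $s\ge2$, $0\le l<p^k$, $0\le\beta\le p-1$: $V_{s-1,l}\to W_{s,pl+\beta}$, block $B_{p^k(p-1)-((p-1)l+\beta),\,(p-1)l+\beta}$;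 (E3) for $s\ge 2$, $0\le l'<p^{k+1}$ and $t=\lfloor l'/p^k\rfloor$: $W_{s,l'}\to V_{s,l'-p^kt}$, block $B_{p^kt,\,p^k(p-1-t)}$. A path ending at a vertex $v$ is a sequence of edges starting at some $S_i$ and going up one floor at a time to $v$ ($S_i\to V_{1,\cdot}\to W_{2,\cdot}\to V_{2,\cdot}\to W_{3,\cdot}\to\cdots\to v$); $\mathcal P(v)$ is the set of all paths ending at $v$. The blocks of a path are numbered $B^2,B^3,\dots,B^N$: $B^2$ is the block of the edge leaving $S_i$, and for $j\ge2$, $B^{2j-1}$ is the block of the edge into $W_{j,\cdot}$ and $B^{2j}$ the block of the edge into $V_{j,\cdot}$. Write $B^j=B_{m_j,n_j}$. Descents: $1\in\mathrm{Des}(P)$ iff $m_2=p^kt$ with $0\le t<\frac{p-1}{2}$; $2\notin\mathrm{Des}(P)$; for $3\le j<N$, $j\in\mathrm{Des}(P)$ iff $m_j>m_{j+1}$ and $n_j<n_{j+1}$. $\mathrm{des}(P)=|\mathrm{Des}(P)|$. The $p^k$-Fibonacci number of a vertex $v$ is $\mathcal M_v=\sum_{P\in\mathcal P(v)}\mathrm{des}(P)$. *)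

theory Defs
  imports "HOL-Computational_Algebra.Primes"
begin

text \<open>Vertices of column k of the p-Bratteli diagram, by their labels:
  Sv i = S_i (floor 2k+1), Vv s l = V_{s,l} (floor 2(k+s)), Wv s l' = W_{s,l'} (floor 2(k+s)-1).\<close>
datatype bvtx = Sv nat | Vv nat nat | Wv nat nat

fun bedge :: "nat \<Rightarrow> nat \<Rightarrow> bvtx \<Rightarrow> bvtx \<Rightarrow> bool" where
  "bedge p k (Sv i) (Vv s l) =
     (s = 1 \<and> i < p^k * (p - 1) \<and> l < p^k \<and> (\<exists>t. t \<le> p - 2 \<and> i = p^k * t + l))"
| "bedge p k (Vv s0 l) (Wv s l') =
     (2 \<le> s \<and> s0 = s - 1 \<and> l < p^k \<and> l' < p^(k+1) \<and> (\<exists>\<beta>. \<beta> \<le> p - 1 \<and> l' = p * l + \<beta>))"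
| "bedge p k (Wv s l') (Vv s2 l) =
     (2 \<le> s \<and> s2 = s \<and> l' < p^(k+1) \<and> l < p^k \<and> l = l' - p^k * (l' div p^k))"
| "bedge p k _ _ = False"

text \<open>Block labelling an edge, as a pair (m, n) = (horizontal nodes, vertical nodes).\<close>
fun bblock :: "nat \<Rightarrow> nat \<Rightarrow> bvtx \<Rightarrow> bvtx \<Rightarrow> nat \<times> nat" where
  "bblock p k (Sv i) (Vv s l) = (let t = i div p^k in (p^k * t, p^k * (p - 2 - t)))"
| "bblock p k (Vv s0 l) (Wv s l') =
     (let \<beta> = l' - p * l in (p^k * (p - 1) - ((p - 1) * l + \<beta>), (p - 1) * l + \<beta>))"
| "bblock p k (Wv s l') (Vv s2 l) = (let t = l' div p^k in (p^k * t, p^k * (p - 1 - t)))"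
| "bblock p k _ _ = (0, 0)"

definition bpaths :: "nat \<Rightarrow> nat \<Rightarrow> bvtx \<Rightarrow> bvtx list set" where
  "bpaths p k v = {vs. vs \<noteq> [] \<and> (\<exists>i. hd vs = Sv i \<and> i < p^k * (p - 1)) \<and> last vs = v \<and>
      (\<forall>j. Suc j < length vs \<longrightarrow> bedge p k (vs ! j) (vs ! Suc j))}"

text \<open>Block B^j = B_{m_j,n_j} of a path (2 \<le> j \<le> N = length of the vertex list).\<close>
definition Bm :: "nat \<Rightarrow> nat \<Rightarrow> bvtx list \<Rightarrow> nat \<Rightarrow> nat" where
  "Bm p k vs j = fst (bblock p k (vs ! (j - 2)) (vs ! (j - 1)))"

definition Bn :: "nat \<Rightarrow> nat \<Rightarrow> bvtx list \<Rightarrow> nat \<Rightarrow> nat" where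
  "Bn p k vs j = snd (bblock p k (vs ! (j - 2)) (vs ! (j - 1)))"

definition Des :: "nat \<Rightarrow> nat \<Rightarrow> bvtx list \<Rightarrow> nat set" where
  "Des p k vs = {j. (j = 1 \<and> 2 \<le> length vs \<and> (\<exists>t. Bm p k vs 2 = p^k * t \<and> 2 * t < p - 1))
      \<or> (3 \<le> j \<and> j < length vs \<and> Bm p k vs j > Bm p k vs (j + 1) \<and> Bn p k vs j < Bn p k vs (j + 1))}"

definition des :: "nat \<Rightarrow> nat \<Rightarrow> bvtx list \<Rightarrow> nat" where
  "des p k vs = card (Des p k vs)"

definition fibM :: "nat \<Rightarrow> nat \<Rightarrow> bvtx \<Rightarrow> nat" where
  "fibM p k v = (\<Sum>P\<in>bpaths p k v. des p k P)"

end

theory Submission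
  imports Defs
begin

lemma bedge_Sv[simp]: "bedge p k x (Sv i) = False" by (cases x) auto

lemma bpaths_last: "q \<in> bpaths p k v \<Longrightarrow> q \<noteq> [] \<and> last q = v"
  by (auto simp: bpaths_def)

lemma bpaths_len2: "q \<in> bpaths p k v \<Longrightarrow> (\<And>i. v \<noteq> Sv i) \<Longrightarrow> 2 \<le> length q"
proof -
  assume q: "q \<in> bpaths p k v" and nv: "\<And>i. v \<noteq> Sv i"
  then obtain i where "q \<noteq> []" "hd q = Sv i" "last q = v" by (auto simp: bpaths_def)
  show ?thesis
  proof (rule ccontr)
    assume "\<not> 2 \<le> length q"
    with \<open>q \<noteq> []\<close> have "length q = 1" by (cases q) (auto simp: Suc_le_eq)
    then obtain x where "q = [x]" by (metis One_nat_def length_0_conv length_Suc_conv)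
    with \<open>hd q = Sv i\<close> \<open>last q = v\<close> nv show False by auto
  qed
qed

lemma bpaths_snoc:
  assumes nv: "\<And>i. v \<noteq> Sv i"
  shows "q \<in> bpaths p k v \<longleftrightarrow> (\<exists>q0 u. q = q0 @ [v] \<and> q0 \<in> bpaths p k u \<and> bedge p k u v)"
proof
  assume q: "q \<in> bpaths p k v"
  have l2: "2 \<le> length q" using bpaths_len2[OF q nv] .
  from q obtain i where ne: "q \<noteq> []" and hd: "hd q = Sv i" and i: "i < p^k * (p - 1)"
    and lst: "last q = v" and ed: "\<And>j. Suc j < length q \<Longrightarrow> bedge p k (q ! j) (q ! Suc j)"
    by (auto simp: bpaths_def)
  define q0 where "q0 = butlast q"
  have qq: "q = q0 @ [v]" using ne lst append_butlast_last_id unfolding q0_def by metis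
  have lq0: "length q0 = length q - 1" by (simp add: q0_def)
  have ne0: "q0 \<noteq> []" using l2 lq0 by auto
  have hd0: "hd q0 = Sv i" using hd ne0 qq by (cases q0) auto
  have nth0: "\<And>j. j < length q0 \<Longrightarrow> q0 ! j = q ! j" using qq by (simp add: nth_append)
  have "q0 \<in> bpaths p k (last q0)"
    unfolding bpaths_def using ne0 hd0 i
    by (auto simp: nth0 intro!: ed simp: lq0)
  moreover have "bedge p k (last q0) v"
  proof -
    have "bedge p k (q ! (length q0 - 1)) (q ! Suc (length q0 - 1))"
      using ed[of "length q0 - 1"] ne0 lq0 l2 by auto
    moreover have "q ! (length q0 - 1) = last q0" using ne0 nth0 by (simp add: last_conv_nth)
    moreover have "q ! Suc (length q0 - 1) = v" using ne0 qq by (simp add: nth_append)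
    ultimately show ?thesis by simp
  qed
  ultimately show "\<exists>q0 u. q = q0 @ [v] \<and> q0 \<in> bpaths p k u \<and> bedge p k u v" using qq by blast
next
  assume "\<exists>q0 u. q = q0 @ [v] \<and> q0 \<in> bpaths p k u \<and> bedge p k u v"
  then obtain q0 u where qq: "q = q0 @ [v]" and q0: "q0 \<in> bpaths p k u" and e: "bedge p k u v" by blast
  from q0 obtain i where ne: "q0 \<noteq> []" and hd: "hd q0 = Sv i" and i: "i < p^k * (p - 1)"
    and lst: "last q0 = u" and ed: "\<And>j. Suc j < length q0 \<Longrightarrow> bedge p k (q0 ! j) (q0 ! Suc j)"
    by (auto simp: bpaths_def)
  have "\<forall>j. Suc j < length q \<longrightarrow> bedge p k (q ! j) (q ! Suc j)"
  proof (intro allI impI)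
    fix j assume j: "Suc j < length q"
    show "bedge p k (q ! j) (q ! Suc j)"
    proof (cases "Suc j < length q0")
      case True thus ?thesis using ed[OF True] qq by (simp add: nth_append)
    next
      case False
      hence "j = length q0 - 1" "Suc j = length q0" using j qq ne by auto
      thus ?thesis using qq e lst ne by (simp add: nth_append last_conv_nth)
    qed
  qed
  thus "q \<in> bpaths p k v" unfolding bpaths_def using qq ne hd i by auto
qed

lemma bpaths_Sv_only: "q \<in> bpaths p k (Sv i) \<Longrightarrow> q = [Sv i]"
proof -
  assume q: "q \<in> bpaths p k (Sv i)"
  from q obtain i' where ne: "q \<noteq> []" and hd: "hd q = Sv i'"
    and lst: "last q = Sv i" and ed: "\<And>j. Suc j < length q \<Longrightarrow> bedge p k (q ! j) (q ! Suc j)"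
    by (auto simp: bpaths_def)
  have "length q = 1"
  proof (rule ccontr)
    assume "length q \<noteq> 1"
    hence "2 \<le> length q" using ne by (cases q) (auto simp: Suc_le_eq)
    hence "bedge p k (q ! (length q - 2)) (q ! Suc (length q - 2))" by (intro ed) auto
    moreover have "q ! Suc (length q - 2) = Sv i" using lst ne \<open>2 \<le> length q\<close>
      by (simp add: last_conv_nth Suc_diff_Suc numeral_2_eq_2)
    ultimately show False by simp
  qed
  then obtain x where "q = [x]" by (metis One_nat_def length_0_conv length_Suc_conv)
  thus ?thesis using lst by simp
qed

lemma bedge_to_W:
  assumes "0 < p"
  shows "bedge p k u (Wv s w) \<longleftrightarrow> (2 \<le> s \<and> w < p^(k+1) \<and> u = Vv (s-1) (w div p))"
proof
  assume e: "bedge p k u (Wv s w)"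
  then obtain s0 l where u: "u = Vv s0 l" by (cases u) auto
  with e obtain \<beta> where "2 \<le> s" "s0 = s - 1" "l < p^k" "w < p^(k+1)" "\<beta> \<le> p - 1" "w = p * l + \<beta>"
    by auto
  moreover have "w div p = l" using \<open>w = p * l + \<beta>\<close> \<open>\<beta> \<le> p - 1\<close> assms by simp
  ultimately show "2 \<le> s \<and> w < p^(k+1) \<and> u = Vv (s-1) (w div p)" using u by simp
next
  assume h: "2 \<le> s \<and> w < p^(k+1) \<and> u = Vv (s-1) (w div p)"
  have "w div p < p^k" using h assms by (simp add: div_less_iff_less_mult mult.commute)
  moreover have "w mod p \<le> p - 1" using assms by (simp add: less_Suc_eq_le[symmetric])
  moreover have "w = p * (w div p) + w mod p" by simp
  ultimately show "bedge p k u (Wv s w)" using h by auto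
qed

lemma bedge_to_V2:
  assumes "2 \<le> s"
  shows "bedge p k u (Vv s l) \<longleftrightarrow> (\<exists>w. u = Wv s w \<and> w < p^(k+1) \<and> l < p^k \<and> l = w mod p^k)"
proof
  assume e: "bedge p k u (Vv s l)"
  show "\<exists>w. u = Wv s w \<and> w < p^(k+1) \<and> l < p^k \<and> l = w mod p^k"
  proof (cases u)
    case (Sv i) thus ?thesis using e assms by auto
  next
    case (Vv a b) thus ?thesis using e by auto
  next
    case (Wv a b) thus ?thesis using e by (auto simp: minus_div_mult_eq_mod[symmetric] mult.commute)
  qed
next
  assume "\<exists>w. u = Wv s w \<and> w < p^(k+1) \<and> l < p^k \<and> l = w mod p^k"
  thus "bedge p k u (Vv s l)" using assms by (auto simp: minus_div_mult_eq_mod[symmetric] mult.commute)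
qed

lemma bedge_to_V1:
  "bedge p k u (Vv (Suc 0) l) \<longleftrightarrow> (\<exists>t. u = Sv (p^k*t + l) \<and> t \<le> p-2 \<and> l < p^k \<and> p^k*t+l < p^k*(p-1))"
proof (cases u)
  case (Sv i) thus ?thesis by auto
next
  case (Vv a b) thus ?thesis by auto
next
  case (Wv a b) thus ?thesis by auto
qed


lemma single_bpaths: "[Sv i] \<in> bpaths p k (Sv i) \<longleftrightarrow> i < p^k * (p-1)"
  by (auto simp: bpaths_def)

lemma bpaths_W:
  assumes "2 \<le> s" "w < p^(k+1)" "0 < p"
  shows "bpaths p k (Wv s w) = (\<lambda>q. q @ [Wv s w]) ` bpaths p k (Vv (s-1) (w div p))"
proof (rule set_eqI)
  fix q
  have "q \<in> bpaths p k (Wv s w) \<longleftrightarrow> (\<exists>q0 u. q = q0 @ [Wv s w] \<and> q0 \<in> bpaths p k u \<and> bedge p k u (Wv s w))"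
    by (rule bpaths_snoc) simp
  also have "\<dots> \<longleftrightarrow> (\<exists>q0. q = q0 @ [Wv s w] \<and> q0 \<in> bpaths p k (Vv (s-1) (w div p)))"
    using assms by (auto simp: bedge_to_W)
  also have "\<dots> \<longleftrightarrow> q \<in> (\<lambda>q. q @ [Wv s w]) ` bpaths p k (Vv (s-1) (w div p))" by auto
  finally show "q \<in> bpaths p k (Wv s w) \<longleftrightarrow> q \<in> (\<lambda>q. q @ [Wv s w]) ` bpaths p k (Vv (s-1) (w div p))" .
qed

lemma aux_lt: "t \<le> p - 2 \<Longrightarrow> l < (P::nat) \<Longrightarrow> 2 \<le> p \<Longrightarrow> P*t + l < P*(p-1)"
proof -
  assume a: "t \<le> p - 2" "l < P" "2 \<le> p"
  have "P*t + l < P*t + P" using a by simp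
  also have "\<dots> = P*(t+1)" by simp
  also have "\<dots> \<le> P*(p-1)" using a by (intro mult_left_mono) auto
  finally show ?thesis .
qed

lemma bpaths_V1:
  assumes "l < p^k" "2 \<le> p"
  shows "bpaths p k (Vv (Suc 0) l) = (\<lambda>t. [Sv (p^k*t+l), Vv (Suc 0) l]) ` {..<p-1}"
proof (rule set_eqI)
  fix q
  show "q \<in> bpaths p k (Vv (Suc 0) l) \<longleftrightarrow> q \<in> (\<lambda>t. [Sv (p^k*t+l), Vv (Suc 0) l]) ` {..<p-1}"
  proof
    assume "q \<in> bpaths p k (Vv (Suc 0) l)"
    then obtain q0 u where "q = q0 @ [Vv (Suc 0) l]" "q0 \<in> bpaths p k u" "bedge p k u (Vv (Suc 0) l)"
      by (auto simp: bpaths_snoc)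
    then obtain t where "q = q0 @ [Vv (Suc 0) l]" "q0 \<in> bpaths p k (Sv (p^k*t + l))" "t \<le> p-2"
      by (auto simp: bedge_to_V1)
    hence "q = [Sv (p^k*t + l), Vv (Suc 0) l]" "t < p - 1" using assms
      by (auto dest: bpaths_Sv_only)
    thus "q \<in> (\<lambda>t. [Sv (p^k*t+l), Vv (Suc 0) l]) ` {..<p-1}" by auto
  next
    assume "q \<in> (\<lambda>t. [Sv (p^k*t+l), Vv (Suc 0) l]) ` {..<p-1}"
    then obtain t where t: "t < p - 1" "q = [Sv (p^k*t+l), Vv (Suc 0) l]" by auto
    have lt: "p^k*t + l < p^k*(p-1)" using aux_lt[of t p l "p^k"] t assms by auto
    have "[Sv (p^k*t+l)] \<in> bpaths p k (Sv (p^k*t+l))" using lt single_bpaths by blast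
    moreover have "bedge p k (Sv (p^k*t+l)) (Vv (Suc 0) l)" using t assms lt by auto
    ultimately have "[Sv (p^k*t+l)] @ [Vv (Suc 0) l] \<in> bpaths p k (Vv (Suc 0) l)"
      using bpaths_snoc[of "Vv (Suc 0) l" "[Sv (p^k*t+l)] @ [Vv (Suc 0) l]" p k] by blast
    thus "q \<in> bpaths p k (Vv (Suc 0) l)" using t(2) by simp
  qed
qed

lemma window_char:
  fixes P :: nat
  assumes "l < P" "0 < P"
  shows "(w < p * P \<and> l = w mod P) \<longleftrightarrow> (\<exists>a<p. w = a * P + l)"
proof
  assume h: "w < p * P \<and> l = w mod P"
  have "w = (w div P) * P + l" using h by simp
  moreover have "w div P < p" using h assms by (simp add: div_less_iff_less_mult)
  ultimately show "\<exists>a<p. w = a * P + l" by blast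
next
  assume "\<exists>a<p. w = a * P + l"
  then obtain a where a: "a < p" "w = a * P + l" by blast
  have "a * P + l < a * P + P" using assms by simp
  also have "\<dots> = (a+1) * P" by simp
  also have "\<dots> \<le> p * P" using a by (intro mult_right_mono) auto
  finally show "w < p * P \<and> l = w mod P" using a assms by simp
qed

lemma bpaths_V:
  assumes "2 \<le> s" "l < p^k" "0 < p"
  shows "bpaths p k (Vv s l) = (\<lambda>(a,q). q @ [Vv s l]) ` (SIGMA a:{..<p}. bpaths p k (Wv s (a*p^k + l)))"
proof (rule set_eqI)
  fix q
  have P0: "0 < (p::nat)^k" using assms by simp
  show "q \<in> bpaths p k (Vv s l) \<longleftrightarrow> q \<in> (\<lambda>(a,q). q @ [Vv s l]) ` (SIGMA a:{..<p}. bpaths p k (Wv s (a*p^k + l)))"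
  proof
    assume "q \<in> bpaths p k (Vv s l)"
    then obtain q0 w where q: "q = q0 @ [Vv s l]" "q0 \<in> bpaths p k (Wv s w)" "w < p^(k+1)" "l = w mod p^k"
      using assms by (auto simp: bpaths_snoc bedge_to_V2)
    then obtain a where "a < p" "w = a * p^k + l" using window_char[OF assms(2) P0, of w p] by auto
    thus "q \<in> (\<lambda>(a,q). q @ [Vv s l]) ` (SIGMA a:{..<p}. bpaths p k (Wv s (a*p^k + l)))"
      using q by auto
  next
    assume "q \<in> (\<lambda>(a,q). q @ [Vv s l]) ` (SIGMA a:{..<p}. bpaths p k (Wv s (a*p^k + l)))"
    then obtain a q0 where a: "a < p" "q0 \<in> bpaths p k (Wv s (a*p^k + l))" "q = q0 @ [Vv s l]" by auto
    have "a*p^k + l < p^(k+1) \<and> l = (a*p^k+l) mod p^k"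
      using window_char[OF assms(2) P0, of "a*p^k+l" p] a by (auto simp: mult.commute)
    hence "bedge p k (Wv s (a*p^k + l)) (Vv s l)" using assms by (auto simp: bedge_to_V2)
    thus "q \<in> bpaths p k (Vv s l)" using a bpaths_snoc[of "Vv s l" q p k] by blast
  qed
qed

lemma inj_snoc: "inj_on (\<lambda>q. q @ [x]) A" by (auto intro: inj_onI)

lemma inj_V:
  assumes "0 < (P::nat)"
  shows "inj_on (\<lambda>(a,q). q @ [Vv s l]) (SIGMA a:{..<p}. bpaths p k (Wv s (a*P + l)))"
proof (rule inj_onI)
  fix x y assume x: "x \<in> (SIGMA a:{..<p}. bpaths p k (Wv s (a*P + l)))"
    and y: "y \<in> (SIGMA a:{..<p}. bpaths p k (Wv s (a*P + l)))"
    and e: "(\<lambda>(a,q). q @ [Vv s l]) x = (\<lambda>(a,q). q @ [Vv s l]) y"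
  obtain a q where xa: "x = (a,q)" by (cases x)
  obtain b r where yb: "y = (b,r)" by (cases y)
  have "q = r" using e xa yb by simp
  moreover have "last q = Wv s (a*P+l)" "last r = Wv s (b*P+l)" using x y xa yb bpaths_last by auto
  ultimately have "a = b" using assms by auto
  thus "x = y" using xa yb \<open>q = r\<close> by simp
qed


definition dat :: "nat \<times> nat \<Rightarrow> nat \<times> nat \<Rightarrow> bool" where
  "dat b1 b2 = (fst b2 < fst b1 \<and> snd b1 < snd b2)"

lemma Des_sub: "Des p k q \<subseteq> {..<length q}"
  by (auto simp: Des_def)

lemma Bm_snoc: "2 \<le> j \<Longrightarrow> j \<le> length q \<Longrightarrow> Bm p k (q@[x]) j = Bm p k q j"
proof -
  assume "2 \<le> j" "j \<le> length q"
  hence "j - 2 < length q" "j - 1 < length q" by auto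
  thus ?thesis by (simp add: Bm_def nth_append)
qed

lemma Bn_snoc: "2 \<le> j \<Longrightarrow> j \<le> length q \<Longrightarrow> Bn p k (q@[x]) j = Bn p k q j"
proof -
  assume "2 \<le> j" "j \<le> length q"
  hence "j - 2 < length q" "j - 1 < length q" by auto
  thus ?thesis by (simp add: Bn_def nth_append)
qed

lemma des_snoc:
  assumes "2 \<le> length q"
  shows "des p k (q @ [x]) = des p k q + (if 3 \<le> length q \<and> Bm p k (q@[x]) (Suc (length q)) < Bm p k (q@[x]) (length q)
      \<and> Bn p k (q@[x]) (length q) < Bn p k (q@[x]) (Suc (length q)) then 1 else 0)"
proof -
  let ?c = "3 \<le> length q \<and> Bm p k (q@[x]) (Suc (length q)) < Bm p k (q@[x]) (length q)
      \<and> Bn p k (q@[x]) (length q) < Bn p k (q@[x]) (Suc (length q))"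
  have eq: "Des p k (q @ [x]) = Des p k q \<union> {j. j = length q \<and> ?c}"
  proof (rule set_eqI)
    fix j
    show "j \<in> Des p k (q @ [x]) \<longleftrightarrow> j \<in> Des p k q \<union> {j. j = length q \<and> ?c}"
    proof (cases "j < length q")
      case True
      have nn: "j \<notin> {j. j = length q \<and> ?c}" using True by simp
      have "j \<in> Des p k (q @ [x]) \<longleftrightarrow> j \<in> Des p k q"
      proof (cases "3 \<le> j")
        case c3: True
        have eqs: "Bm p k (q@[x]) j = Bm p k q j" "Bm p k (q@[x]) (j+1) = Bm p k q (j+1)"
          "Bn p k (q@[x]) j = Bn p k q j" "Bn p k (q@[x]) (j+1) = Bn p k q (j+1)"
          using True c3 by (simp_all add: Bm_snoc Bn_snoc)
        have "j \<noteq> 1" using c3 by simp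
        thus ?thesis unfolding Des_def mem_Collect_eq eqs using True c3 by simp
      next
        case c3: False
        have e2: "Bm p k (q@[x]) 2 = Bm p k q 2" using assms by (simp add: Bm_snoc)
        show ?thesis unfolding Des_def mem_Collect_eq e2 using c3 assms by simp
      qed
      thus ?thesis using nn by blast
    next
      case False
      have n: "j \<notin> Des p k q" using Des_sub[of p k q] False by (meson lessThan_iff subsetD)
      have "j \<in> Des p k (q @ [x]) \<longleftrightarrow> j = length q \<and> ?c"
      proof
        assume j: "j \<in> Des p k (q @ [x])"
        have "j \<noteq> 1" using False assms by linarith
        have "(j = 1 \<and> 2 \<le> length (q @ [x]) \<and> (\<exists>t. Bm p k (q @ [x]) 2 = p^k * t \<and> 2 * t < p - 1))
      \<or> (3 \<le> j \<and> j < length (q @ [x]) \<and> Bm p k (q @ [x]) j > Bm p k (q @ [x]) (j + 1) \<and> Bn p k (q @ [x]) j < Bn p k (q @ [x]) (j + 1))"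
          using j unfolding Des_def mem_Collect_eq .
        hence c: "3 \<le> j \<and> j < length (q @ [x]) \<and> Bm p k (q @ [x]) j > Bm p k (q @ [x]) (j + 1) \<and> Bn p k (q @ [x]) j < Bn p k (q @ [x]) (j + 1)"
          using \<open>j \<noteq> 1\<close> by blast
        have "j = length q" using c False by (simp only: length_append_singleton) linarith
        thus "j = length q \<and> ?c" using c by (simp only: Suc_eq_plus1) 
      next
        assume "j = length q \<and> ?c"
        hence "3 \<le> j \<and> j < length (q @ [x]) \<and> Bm p k (q @ [x]) (j + 1) < Bm p k (q @ [x]) j
          \<and> Bn p k (q @ [x]) j < Bn p k (q @ [x]) (j + 1)" by (simp only: Suc_eq_plus1 length_append_singleton) simp
        thus "j \<in> Des p k (q @ [x])" unfolding Des_def mem_Collect_eq by (rule disjI2)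
      qed
      thus ?thesis using n by (simp only: Un_iff mem_Collect_eq) blast
    qed
  qed
  have fin: "finite (Des p k q)" using Des_sub[of p k q] finite_subset by blast
  have dis: "Des p k q \<inter> {j. j = length q \<and> ?c} = {}" using Des_sub[of p k q] by auto
  have "card (Des p k (q @ [x])) = card (Des p k q) + card {j. j = length q \<and> ?c}"
    unfolding eq using fin dis by (intro card_Un_disjoint) auto
  moreover have "card {j. j = length q \<and> ?c} = (if ?c then 1 else 0)" by auto
  ultimately show ?thesis unfolding des_def by simp
qed

lemma des_snoc2:
  assumes "2 \<le> length q0"
  shows "des p k (q0 @ [u, x]) = des p k (q0 @ [u]) + (if dat (bblock p k (last q0) u) (bblock p k u x) then 1 else 0)"
proof -
  have l: "2 \<le> length (q0 @ [u])" using assms by simp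
  have e: "q0 @ [u, x] = (q0 @ [u]) @ [x]" by simp
  have ne: "q0 \<noteq> []" "length q0 - 1 < length q0" using assms by auto
  have n1: "((q0 @ [u]) @ [x]) ! (length q0 - 1) = last q0" using ne
    by (simp add: nth_append last_conv_nth)
  have n2: "((q0 @ [u]) @ [x]) ! (length q0) = u" by (simp add: nth_append)
  have n3: "((q0 @ [u]) @ [x]) ! (Suc (length q0)) = x" by (simp add: nth_append)
  have bm1: "Bm p k ((q0 @ [u]) @ [x]) (length (q0 @ [u])) = fst (bblock p k (last q0) u)"
    using assms n1 n2 by (simp add: Bm_def)
  have bn1: "Bn p k ((q0 @ [u]) @ [x]) (length (q0 @ [u])) = snd (bblock p k (last q0) u)"
    using assms n1 n2 by (simp add: Bn_def)
  have bm2: "Bm p k ((q0 @ [u]) @ [x]) (Suc (length (q0 @ [u]))) = fst (bblock p k u x)"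
    using n2 n3 by (simp add: Bm_def)
  have bn2: "Bn p k ((q0 @ [u]) @ [x]) (Suc (length (q0 @ [u]))) = snd (bblock p k u x)"
    using n2 n3 by (simp add: Bn_def)
  show ?thesis unfolding e des_snoc[OF l] bm1 bn1 bm2 bn2 dat_def using assms by simp
qed

lemma des_base:
  assumes "0 < p"
  shows "des p k [Sv i, Vv s l] = (if 2 * (i div p^k) < p - 1 then 1 else 0)"
proof -
  have "Des p k [Sv i, Vv s l] = {j. j = 1 \<and> 2 * (i div p^k) < p - 1}"
    using assms by (auto simp: Des_def Bm_def Let_def)
  thus ?thesis unfolding des_def by auto
qed


lemma divp_lt: "w < p^(k+1) \<Longrightarrow> 0 < p \<Longrightarrow> w div p < (p::nat)^k"
  by (simp add: div_less_iff_less_mult mult.commute)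

lemma win_lt: "a < p \<Longrightarrow> l < (p::nat)^k \<Longrightarrow> a * p^k + l < p^(k+1)"
proof -
  assume "a < p" "l < p^k"
  have "a * p^k + l < a * p^k + p^k" using \<open>l < p^k\<close> by simp
  also have "\<dots> = (a+1) * p^k" by simp
  also have "\<dots> \<le> p * p^k" using \<open>a < p\<close> by (intro mult_right_mono) auto
  finally show ?thesis by simp
qed

lemma cardV:
  assumes "1 \<le> s" "l < p^k" "2 \<le> p"
  shows "finite (bpaths p k (Vv s l)) \<and> card (bpaths p k (Vv s l)) = (p-1)*p^(s-1)"
  using assms(1,2)
proof (induction s arbitrary: l rule: nat_induct_at_least)
  case base
  have "0 < p^k" using assms by simp
  hence "inj_on (\<lambda>t. [Sv (p^k*t+l), Vv (Suc 0) l]) {..<p-1}" by (auto intro!: inj_onI)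
  thus ?case using bpaths_V1[OF base assms(3)] by (simp add: card_image)
next
  case (Suc n)
  have p0: "0 < p" "0 < (p::nat)^k" using assms by auto
  have W: "\<And>a. a < p \<Longrightarrow> finite (bpaths p k (Wv (Suc n) (a*p^k + l))) \<and> card (bpaths p k (Wv (Suc n) (a*p^k + l))) = (p-1)*p^(n-1)"
  proof -
    fix a assume a: "a < p"
    have lt: "a*p^k + l < p^(k+1)" using win_lt[OF a Suc.prems] .
    have e: "bpaths p k (Wv (Suc n) (a*p^k + l)) = (\<lambda>q. q @ [Wv (Suc n) (a*p^k + l)]) ` bpaths p k (Vv n ((a*p^k + l) div p))"
      using bpaths_W[OF _ lt p0(1)] Suc.hyps by simp
    have "(a*p^k + l) div p < p^k" using divp_lt[OF lt p0(1)] .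
    from Suc.IH[OF this] show "finite (bpaths p k (Wv (Suc n) (a*p^k + l))) \<and> card (bpaths p k (Wv (Suc n) (a*p^k + l))) = (p-1)*p^(n-1)"
      unfolding e by (simp add: card_image[OF inj_snoc])
  qed
  have e: "bpaths p k (Vv (Suc n) l) = (\<lambda>(a,q). q @ [Vv (Suc n) l]) ` (SIGMA a:{..<p}. bpaths p k (Wv (Suc n) (a*p^k + l)))"
    using bpaths_V[OF _ Suc.prems p0(1)] Suc.hyps by simp
  have fin: "finite (SIGMA a:{..<p}. bpaths p k (Wv (Suc n) (a*p^k + l)))" using W by auto
  have "card (SIGMA a:{..<p}. bpaths p k (Wv (Suc n) (a*p^k + l))) = (\<Sum>a<p. card (bpaths p k (Wv (Suc n) (a*p^k + l))))"
    using W by (subst card_SigmaI) auto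
  also have "\<dots> = (\<Sum>a<p. (p-1)*p^(n-1))" using W by (intro sum.cong) auto
  also have "\<dots> = (p-1)*p^(Suc n - 1)" using Suc.hyps by (cases n) auto
  finally show ?case unfolding e using fin inj_V[OF p0(2)] by (simp add: card_image)
qed

lemma cardW:
  assumes "2 \<le> s" "w < p^(k+1)" "2 \<le> p"
  shows "finite (bpaths p k (Wv s w)) \<and> card (bpaths p k (Wv s w)) = (p-1)*p^(s-2)"
proof -
  have p0: "0 < p" using assms by auto
  have "w div p < p^k" using divp_lt[OF assms(2) p0] .
  have c: "finite (bpaths p k (Vv (s-1) (w div p))) \<and> card (bpaths p k (Vv (s-1) (w div p))) = (p-1)*p^(s-1-1)"
    using cardV[OF _ \<open>w div p < p^k\<close> assms(3), of "s-1"] assms(1) by simp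
  have ss: "s-1-1 = s-2" by simp
  have "card ((\<lambda>q. q @ [Wv s w]) ` bpaths p k (Vv (s-1) (w div p))) = card (bpaths p k (Vv (s-1) (w div p)))"
    by (rule card_image[OF inj_snoc])
  thus ?thesis unfolding bpaths_W[OF assms(1,2) p0] using c ss by simp
qed


definition X :: "nat \<Rightarrow> nat \<Rightarrow> nat" where "X p w = (p-1)*(w div p) + w mod p"

definition Ad :: "nat \<Rightarrow> nat \<Rightarrow> nat \<Rightarrow> nat" where
  "Ad p k w = (if dat (p^k*(p-1) - X p w, X p w) (p^k*(w div p^k), p^k*(p-1-w div p^k)) then 1 else 0)"

definition Bd :: "nat \<Rightarrow> nat \<Rightarrow> nat \<Rightarrow> nat \<Rightarrow> nat" where
  "Bd p k a w = (if dat (p^k*a, p^k*(p-1-a)) (p^k*(p-1) - X p w, X p w) then 1 else 0)"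

lemma bb_VW: "bblock p k (Vv s0 (w div p)) (Wv s w) = (p^k*(p-1) - X p w, X p w)"
  by (simp add: Let_def X_def minus_mult_div_eq_mod)

lemma bb_WV: "bblock p k (Wv s w) (Vv s2 l) = (p^k*(w div p^k), p^k*(p-1-w div p^k))"
  by (simp add: Let_def)

lemma des_V_step:
  assumes "2 \<le> s" "w < p^(k+1)" "0 < p" "q \<in> bpaths p k (Wv s w)"
  shows "des p k (q @ [Vv s2 l]) = des p k q + Ad p k w"
proof -
  obtain q0 where q: "q = q0 @ [Wv s w]" "q0 \<in> bpaths p k (Vv (s-1) (w div p))"
    using assms(4) unfolding bpaths_W[OF assms(1-3)] by auto
  have l: "2 \<le> length q0" using bpaths_len2[OF q(2)] by simp
  have ll: "last q0 = Vv (s-1) (w div p)" using bpaths_last[OF q(2)] by simp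
  note e = des_snoc2[OF l, of p k "Wv s w" "Vv s2 l"]
  show ?thesis unfolding q using e[unfolded ll bb_VW bb_WV] by (simp add: Ad_def)
qed

lemma des_W_step:
  assumes "2 \<le> s" "a < p" "w < p^(k+1)" "0 < p" "q \<in> bpaths p k (Wv s (a*p^k + w div p))"
  shows "des p k (q @ [Vv s (w div p), Wv s' w]) = des p k (q @ [Vv s (w div p)]) + Bd p k a w"
proof -
  have lt: "w div p < p^k" using divp_lt[OF assms(3,4)] .
  have l: "2 \<le> length q" using bpaths_len2[OF assms(5)] by simp
  have ll: "last q = Wv s (a*p^k + w div p)" using bpaths_last[OF assms(5)] by simp
  have t: "(a*p^k + w div p) div p^k = a" using lt assms(4) by simp
  note e = des_snoc2[OF l, of p k "Vv s (w div p)" "Wv s' w"]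
  show ?thesis using e[unfolded ll bb_VW bb_WV t] by (simp add: Bd_def)
qed

lemma sum_if_less: "(\<Sum>t<n. if t < m then 1 else 0) = min n (m::nat)"
  by (induction n) auto

lemma FV1:
  assumes "l < p^k" "odd p" "2 \<le> p"
  shows "fibM p k (Vv (Suc 0) l) = (p-1) div 2"
proof -
  have P0: "0 < p^k" using assms by simp
  have inj: "inj_on (\<lambda>t. [Sv (p^k*t+l), Vv (Suc 0) l]) {..<p-1}" using P0 by (auto intro!: inj_onI)
  have "fibM p k (Vv (Suc 0) l) = (\<Sum>t<p-1. des p k [Sv (p^k*t+l), Vv (Suc 0) l])"
    unfolding fibM_def bpaths_V1[OF assms(1,3)] sum.reindex[OF inj] comp_def by simp
  also have "\<dots> = (\<Sum>t<p-1. if t < (p-1) div 2 then 1 else 0)"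
  proof (intro sum.cong refl)
    fix t assume "t \<in> {..<p-1}"
    have "(p^k*t+l) div p^k = t" using assms(1) P0 by simp
    moreover have "2*t < p - 1 \<longleftrightarrow> t < (p-1) div 2" using assms(2) by (auto elim!: oddE)
    ultimately show "des p k [Sv (p^k*t+l), Vv (Suc 0) l] = (if t < (p-1) div 2 then 1 else 0)"
      using assms by (simp add: des_base)
  qed
  also have "\<dots> = (p-1) div 2" by (simp add: sum_if_less)
  finally show ?thesis .
qed

lemma FV_rec:
  assumes "2 \<le> s" "l < p^k" "2 \<le> p"
  shows "fibM p k (Vv s l) = (\<Sum>a<p. fibM p k (Wv s (a*p^k+l)) + (p-1)*p^(s-2) * Ad p k (a*p^k+l))"
proof -
  have p0: "0 < p" "0 < (p::nat)^k" using assms by auto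
  let ?S = "SIGMA a:{..<p}. bpaths p k (Wv s (a*p^k + l))"
  have lt: "\<And>a. a < p \<Longrightarrow> a*p^k + l < p^(k+1)" using win_lt assms by blast
  have fW: "\<And>a. a < p \<Longrightarrow> finite (bpaths p k (Wv s (a*p^k + l))) \<and> card (bpaths p k (Wv s (a*p^k + l))) = (p-1)*p^(s-2)"
    using cardW[OF assms(1) lt assms(3)] by blast
  have "fibM p k (Vv s l) = (\<Sum>x\<in>?S. des p k ((\<lambda>(a,q). q @ [Vv s l]) x))"
    unfolding fibM_def bpaths_V[OF assms(1,2) p0(1)] by (simp add: sum.reindex[OF inj_V[OF p0(2)]])
  also have "\<dots> = (\<Sum>a<p. \<Sum>q\<in>bpaths p k (Wv s (a*p^k + l)). des p k (q @ [Vv s l]))"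
    using fW by (subst sum.Sigma) (auto simp: case_prod_beta)
  also have "\<dots> = (\<Sum>a<p. \<Sum>q\<in>bpaths p k (Wv s (a*p^k + l)). des p k q + Ad p k (a*p^k+l))"
    using des_V_step[OF assms(1) lt p0(1)] by (intro sum.cong refl) auto
  also have "\<dots> = (\<Sum>a<p. fibM p k (Wv s (a*p^k+l)) + (p-1)*p^(s-2) * Ad p k (a*p^k+l))"
    using fW by (intro sum.cong refl) (simp add: sum.distrib fibM_def)
  finally show ?thesis .
qed

lemma FW_rec:
  assumes "2 \<le> s" "w < p^(k+1)" "2 \<le> p"
  shows "fibM p k (Wv s w) = fibM p k (Vv (s-1) (w div p)) + (if 3 \<le> s then (p-1)*p^(s-3) * (\<Sum>a<p. Bd p k a w) else 0)"
proof -
  have p0: "0 < p" "0 < (p::nat)^k" using assms by auto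
  have lt0: "w div p < p^k" using divp_lt[OF assms(2) p0(1)] .
  have base: "fibM p k (Wv s w) = (\<Sum>q\<in>bpaths p k (Vv (s-1) (w div p)). des p k (q @ [Wv s w]))"
    unfolding fibM_def bpaths_W[OF assms(1,2) p0(1)] by (simp add: sum.reindex[OF inj_snoc])
  show ?thesis
  proof (cases "s = 2")
    case True
    have "des p k (q @ [Wv s w]) = des p k q" if q: "q \<in> bpaths p k (Vv (s-1) (w div p))" for q
    proof -
      obtain t where "q = [Sv (p^k*t + w div p), Vv (Suc 0) (w div p)]"
        using q True bpaths_V1[OF lt0 assms(3)] by auto
      thus ?thesis using des_snoc[of "[Sv (p^k*t + w div p), Vv (Suc 0) (w div p)]" p k "Wv s w"] by simp
    qed
    thus ?thesis unfolding base using True by (simp add: fibM_def)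
  next
    case False
    hence s3: "3 \<le> s" using assms by simp
    have s1: "2 \<le> s - 1" using s3 by simp
    let ?S = "SIGMA a:{..<p}. bpaths p k (Wv (s-1) (a*p^k + w div p))"
    have lt: "\<And>a. a < p \<Longrightarrow> a*p^k + w div p < p^(k+1)" using win_lt lt0 by blast
    have fW: "\<And>a. a < p \<Longrightarrow> finite (bpaths p k (Wv (s-1) (a*p^k + w div p))) \<and> card (bpaths p k (Wv (s-1) (a*p^k + w div p))) = (p-1)*p^(s-3)"
      using cardW[OF s1 lt assms(3)] by (simp add: numeral_3_eq_3)
    have sv: "(\<Sum>q\<in>bpaths p k (Vv (s-1) (w div p)). g q) = (\<Sum>a<p. \<Sum>q\<in>bpaths p k (Wv (s-1) (a*p^k + w div p)). g (q @ [Vv (s-1) (w div p)]))" for g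
    proof -
      have "(\<Sum>q\<in>bpaths p k (Vv (s-1) (w div p)). g q) = (\<Sum>x\<in>?S. g ((\<lambda>(a,q). q @ [Vv (s-1) (w div p)]) x))"
        unfolding bpaths_V[OF s1 lt0 p0(1)] by (simp add: sum.reindex[OF inj_V[OF p0(2)]])
      also have "\<dots> = (\<Sum>a<p. \<Sum>q\<in>bpaths p k (Wv (s-1) (a*p^k + w div p)). g (q @ [Vv (s-1) (w div p)]))"
        using fW by (subst sum.Sigma) (auto simp: case_prod_beta)
      finally show ?thesis .
    qed
    have "fibM p k (Wv s w) = (\<Sum>a<p. \<Sum>q\<in>bpaths p k (Wv (s-1) (a*p^k + w div p)). des p k (q @ [Vv (s-1) (w div p), Wv s w]))"
      unfolding base sv by simp
    also have "\<dots> = (\<Sum>a<p. \<Sum>q\<in>bpaths p k (Wv (s-1) (a*p^k + w div p)). des p k (q @ [Vv (s-1) (w div p)]) + Bd p k a w)"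
      using des_W_step[OF s1 _ assms(2) p0(1)] by (intro sum.cong refl) auto
    also have "\<dots> = (\<Sum>a<p. \<Sum>q\<in>bpaths p k (Wv (s-1) (a*p^k + w div p)). des p k (q @ [Vv (s-1) (w div p)]))
        + (\<Sum>a<p. (p-1)*p^(s-3) * Bd p k a w)"
    proof -
      have "(\<Sum>q\<in>bpaths p k (Wv (s-1) (a*p^k + w div p)). des p k (q @ [Vv (s-1) (w div p)]) + Bd p k a w)
        = (\<Sum>q\<in>bpaths p k (Wv (s-1) (a*p^k + w div p)). des p k (q @ [Vv (s-1) (w div p)])) + (p-1)*p^(s-3) * Bd p k a w"
        if a: "a < p" for a
      proof -
        have "card (bpaths p k (Wv (s-1) (a*p^k + w div p))) = (p-1)*p^(s-3)" using fW[OF a] by blast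
        thus ?thesis by (simp add: sum.distrib)
      qed
      hence "(\<Sum>a<p. \<Sum>q\<in>bpaths p k (Wv (s-1) (a*p^k + w div p)). des p k (q @ [Vv (s-1) (w div p)]) + Bd p k a w)
        = (\<Sum>a<p. (\<Sum>q\<in>bpaths p k (Wv (s-1) (a*p^k + w div p)). des p k (q @ [Vv (s-1) (w div p)])) + (p-1)*p^(s-3) * Bd p k a w)"
        by (intro sum.cong refl) auto
      thus ?thesis by (simp only: sum.distrib)
    qed
    also have "(\<Sum>a<p. \<Sum>q\<in>bpaths p k (Wv (s-1) (a*p^k + w div p)). des p k (q @ [Vv (s-1) (w div p)])) = fibM p k (Vv (s-1) (w div p))"
      unfolding fibM_def sv by simp
    finally show ?thesis using s3 by (simp add: sum_distrib_left)
  qed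
qed


lemma key_odd_t:
  fixes t Q v r :: int
  assumes "1 \<le> t" "0 \<le> v" "v < Q" "0 \<le> r" "r \<le> 2*t" "odd Q"
  shows "(2*t*v + r < t*Q) \<longleftrightarrow> (2*(2*t+1)*v + 2*r + 1 < (2*t+1)*Q)"
proof -
  have f1: "2*t*v = 2*(t*v)" by simp
  have f2: "2*(2*t+1)*v = 4*(t*v) + 2*v" by (simp add: algebra_simps)
  have f3: "(2*t+1)*Q = 2*(t*Q) + Q" by (simp add: algebra_simps)
  consider "2*v+1 < Q" | "2*v+1 = Q" | "2*v+1 > Q" by linarith
  thus ?thesis
  proof cases
    case 1
    obtain j where j: "Q = 2*j+1" using assms(6) by (auto elim!: oddE)
    hence q3: "2*v + 3 \<le> Q" using 1 by presburger
    have a: "t*(2*v+3) \<le> t*Q" using q3 assms(1) by (intro mult_left_mono) auto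
    have e: "t*(2*v+3) = 2*(t*v) + 3*t" by (simp add: algebra_simps)
    show ?thesis using a e f1 f2 f3 assms q3 by linarith
  next
    case 2
    hence e: "t*Q = 2*(t*v) + t" by (simp add: algebra_simps flip: 2)
    show ?thesis using e f1 f2 f3 2 by linarith
  next
    case 3
    obtain j where j: "Q = 2*j+1" using assms(6) by (auto elim!: oddE)
    hence q3: "Q + 1 \<le> 2*v" using 3 by presburger
    have a: "t*(Q+1) \<le> t*(2*v)" using q3 assms(1) by (intro mult_left_mono) auto
    have e: "t*(Q+1) = t*Q + t" "t*(2*v) = 2*(t*v)" by (simp_all add: algebra_simps)
    show ?thesis using a e f1 f2 f3 assms q3 by linarith
  qed
qed

lemma key_even:
  fixes p e r q m :: int
  assumes "2 \<le> p" "0 \<le> e" "e \<le> p-1" "0 \<le> r" "r \<le> p-1" "0 \<le> q" "0 \<le> m" "e = p - 1 \<longrightarrow> q \<le> m"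
  shows "((p-1)*m + e < (p-1)*q + r) \<longleftrightarrow> (p*m + e < p*q + r)"
proof -
  have f: "(p-1)*m = p*m - m" "(p-1)*q = p*q - q" by (simp_all add: algebra_simps)
  consider "q > m" | "q = m" | "q < m" by linarith
  thus ?thesis
  proof cases
    case 1
    have a: "p*(m+1) \<le> p*q" using 1 assms by (intro mult_left_mono) auto
    have a2: "p*(m+1) = p*m + p" by (simp add: algebra_simps)
    have "e < p - 1" using 1 assms by auto
    have b: "(p-1)*(m+1) \<le> (p-1)*q" using 1 assms by (intro mult_left_mono) auto
    have b2: "(p-1)*(m+1) = (p-1)*m + (p-1)" by (simp add: algebra_simps)
    have "(p-1)*m + e < (p-1)*q + r" using b b2 \<open>e < p - 1\<close> assms(4) by linarith
    moreover have "p*m + e < p*q + r" using a a2 assms(3,4) by linarith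
    ultimately show ?thesis by simp
  next
    case 2 thus ?thesis by simp
  next
    case 3
    have a: "p*(q+1) \<le> p*m" using 3 assms by (intro mult_left_mono) auto
    have a2: "p*(q+1) = p*q + p" by (simp add: algebra_simps)
    have b: "(p-1)*(q+1) \<le> (p-1)*m" using 3 assms by (intro mult_left_mono) auto
    have b2: "(p-1)*(q+1) = (p-1)*q + (p-1)" by (simp add: algebra_simps)
    have "\<not> (p-1)*m + e < (p-1)*q + r" using b b2 assms(2,5) by linarith
    moreover have "\<not> p*m + e < p*q + r" using a a2 assms(2,5) by linarith
    ultimately show ?thesis by simp
  qed
qed



lemma key_odd:
  fixes p P Q t u v r q :: int
  assumes "3 \<le> p" "odd p" "P = p*Q" "1 \<le> Q" "odd Q" "0 \<le> t" "t \<le> p-1" "0 \<le> u" "u < P"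
    "u = p*v + r" "0 \<le> v" "v < Q" "0 \<le> r" "r < p" "q = Q*t + v" "0 \<le> q" "q < P"
  shows "(2*(P*t) + u - q < P*(p-1)) \<longleftrightarrow> (2*(P*t + u) + 1 < p*P)"
proof -
  have pP: "p*P = P*p" by simp
  have e1: "P*(p-1) = P*p - P" by (simp add: algebra_simps)
  consider "2*t+1 < p" | "2*t+1 = p" | "2*t+1 > p" by linarith
  thus ?thesis
  proof cases
    case 1
    obtain j where j: "p = 2*j+1" using assms(2) by (auto elim!: oddE)
    hence t3: "2*t + 3 \<le> p" using 1 by presburger
    have a: "P*(2*t+2) \<le> P*p" using t3 assms by (intro mult_left_mono) auto
    have a2: "P*(2*t+2) = 2*(P*t) + 2*P" by (simp add: algebra_simps)
    have b: "P*(2*t+1) \<le> P*(p-1)" using t3 assms by (intro mult_left_mono) auto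
    have b2: "P*(2*t+1) = 2*(P*t) + P" by (simp add: algebra_simps)
    have u1: "u + 1 \<le> P" using assms(9) by linarith
    have "2*(P*t) + u - q < P*(p-1)" using b b2 assms(9,16) by linarith
    moreover have "2*(P*t + u) + 1 < p*P" using a a2 pP u1 by (smt (verit))
    ultimately show ?thesis by simp
  next
    case 2
    have pt: "P*(p-1) = 2*(P*t)" using 2 by (simp add: algebra_simps flip: 2)
    have "(2*(P*t) + u - q < P*(p-1)) \<longleftrightarrow> u < q" using pt by linarith
    also have "\<dots> \<longleftrightarrow> 2*t*v + r < t*Q"
    proof -
      have "u = 2*t*v + v + r" using assms(10) 2 by (simp add: algebra_simps flip: 2)
      thus ?thesis using assms(15) by (simp add: algebra_simps)
    qed
    also have "\<dots> \<longleftrightarrow> 2*(2*t+1)*v + 2*r + 1 < (2*t+1)*Q"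
      using key_odd_t[of t v Q r] assms 2 by linarith
    also have "\<dots> \<longleftrightarrow> 2*u + 1 < P" using assms(3,10) 2 by (simp add: algebra_simps flip: 2)
    also have "\<dots> \<longleftrightarrow> 2*(P*t + u) + 1 < p*P"
    proof -
      have "p*P = 2*(P*t) + P" using 2 by (simp add: algebra_simps flip: 2)
      thus ?thesis by (smt (verit))
    qed
    finally show ?thesis .
  next
    case 3
    obtain j where j: "p = 2*j+1" using assms(2) by (auto elim!: oddE)
    hence t3: "p + 1 \<le> 2*t" using 3 by presburger
    have a: "P*(p+1) \<le> P*(2*t)" using t3 assms by (intro mult_left_mono) auto
    have a2: "P*(p+1) = P*p + P" "P*(2*t) = 2*(P*t)" by (simp_all add: algebra_simps)
    have c: "P*p + P \<le> 2*(P*t)" using a a2 by linarith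
    have "\<not> 2*(P*t) + u - q < P*p - P" using c assms(8,16,17) by linarith
    hence "\<not> 2*(P*t) + u - q < P*(p-1)" by (subst e1)
    moreover have "\<not> 2*(P*t) + 2*u + 1 < P*p" using c assms(8,9) by linarith
    hence "\<not> 2*(P*t + u) + 1 < p*P" by (simp add: algebra_simps)
    ultimately show ?thesis by simp
  qed
qed


definition R :: "nat \<Rightarrow> nat \<Rightarrow> nat" where "R p n = (\<Sum>i<n. p^i)"

lemma R_0[simp]: "R p 0 = 0" by (simp add: R_def)
lemma R_Suc: "R p (Suc n) = R p n + p^n" by (simp add: R_def)

lemma R_geom: "1 \<le> p \<Longrightarrow> (p-1) * R p n + 1 = p^n"
proof (induction n)
  case 0 thus ?case by simp
next
  case (Suc n)
  have "(p-1) * R p (Suc n) + 1 = ((p-1) * R p n + 1) + (p-1)*p^n" by (simp add: R_Suc algebra_simps)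
  also have "\<dots> = p^n + (p-1)*p^n" using Suc by simp
  also have "\<dots> = p^Suc n" using Suc.prems by (simp add: algebra_simps)
  finally show ?case .
qed

lemma R_add: "R p (a+b) = R p a * p^b + R p b"
proof (induction a)
  case 0 thus ?case by simp
next
  case (Suc a)
  thus ?case by (simp add: R_Suc algebra_simps power_add)
qed

lemma R_Suc': "R p (Suc n) = p * R p n + 1"
  using R_add[of p n 1] by (simp add: R_def)

lemma R_pos: "0 < n \<Longrightarrow> 0 < p \<Longrightarrow> 0 < R p n"
  by (cases n) (auto simp: R_Suc)

lemma tR_lt: "1 \<le> p \<Longrightarrow> t \<le> p - 1 \<Longrightarrow> t * R p n < p^n"
proof -
  assume a: "1 \<le> p" "t \<le> p - 1"
  have "t * R p n \<le> (p-1) * R p n" using a by (intro mult_right_mono) auto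
  also have "\<dots> < p^n" using R_geom[OF a(1), of n] by linarith
  finally show ?thesis .
qed

lemma odd_pow: "odd p \<Longrightarrow> odd ((p::nat)^n)" by simp

lemma Ad_char:
  assumes "odd p" "3 \<le> p" "1 \<le> k" "w < p^(k+1)"
  shows "Ad p k w = (if 2*w+1 < p^(k+1) then 1 else 0)"
proof -
  define P where "P = p^k"
  define Q where "Q = p^(k-1)"
  have PQ: "P = p * Q" unfolding P_def Q_def using assms(3) by (metis Suc_diff_1 less_le_trans power_Suc zero_less_one)
  have Q1: "1 \<le> Q" using assms unfolding Q_def by simp
  have Qo: "odd Q" using assms unfolding Q_def by simp
  define t where "t = w div P"
  define u where "u = w mod P"
  define v where "v = u div p"
  define r where "r = u mod p"
  have P0: "0 < P" using assms P_def by simp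
  have wP: "w = P*t + u" unfolding t_def u_def by simp
  have uP: "u < P" unfolding u_def using P0 by simp
  have tp: "t < p" unfolding t_def using assms(4) P0 unfolding P_def by (simp add: div_less_iff_less_mult mult.commute)
  have uv: "u = p*v + r" unfolding v_def r_def by simp
  have rp: "r < p" unfolding r_def using assms by simp
  have p0: "0 < p" using assms by simp
  have vQ: "v < Q" using uP PQ p0 unfolding v_def by (simp add: div_less_iff_less_mult mult.commute)
  have w2: "w = u + (Q*t)*p" using wP PQ by (simp add: algebra_simps)
  have wq: "w div p = Q*t + v" unfolding v_def using p0 by (subst w2) simp
  have wr: "w mod p = r" unfolding r_def by (subst w2) simp
  have qP: "w div p < P" using divp_lt[OF assms(4)] assms P_def by simp
  obtain p' where pp: "p = Suc p'" using p0 by (cases p) auto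
  have Xq: "X p w + w div p = w" unfolding X_def pp
  proof -
    have "(Suc p' - 1) * (w div Suc p') + w mod Suc p' + w div Suc p' = Suc p' * (w div Suc p') + w mod Suc p'"
      by simp
    also have "\<dots> = w" by (rule div_mult_mod_eq[of w "Suc p'", unfolded mult.commute[of "w div Suc p'"]])
    finally show "(Suc p' - 1) * (w div Suc p') + w mod Suc p' + w div Suc p' = w" .
  qed
  have dat_eq: "dat (P*(p-1) - X p w, X p w) (P*t, P*(p-1-t)) \<longleftrightarrow> X p w + P*t < P*(p-1)"
  proof -
    have "P*(p-1-t) = P*(p-1) - P*t" by (simp add: diff_mult_distrib2)
    thus ?thesis unfolding dat_def by auto
  qed
  have "X p w + P*t < P*(p-1) \<longleftrightarrow> 2*(int P*int t) + int u - int (w div p) < int P*(int p-1)"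
  proof -
    have "int (X p w) = int w - int (w div p)" using Xq by linarith
    moreover have "int (P*(p-1)) = int P*(int p - 1)" using assms by (simp add: of_nat_diff)
    moreover have "int w = int P * int t + int u" using wP by simp
    ultimately have e: "int (X p w) + int P * int t = 2*(int P * int t) + int u - int (w div p)"
      "int (P*(p-1)) = int P * (int p - 1)" by simp_all
    have c1: "(X p w + P*t < P*(p-1)) \<longleftrightarrow> (int (X p w) + int P * int t < int (P*(p-1)))"
      by (metis of_nat_add of_nat_less_iff of_nat_mult)
    show ?thesis by (simp only: c1 e)
  qed
  also have "\<dots> \<longleftrightarrow> (2*(int P*int t + int u) + 1 < int p*int P)"
    by (rule key_odd[where Q="int Q" and v="int v" and r="int r"])
      (use assms PQ Q1 Qo tp uP uv vQ rp wq qP in \<open>auto simp: of_nat_less_iff simp flip: of_nat_mult of_nat_add\<close>)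
  also have "\<dots> \<longleftrightarrow> 2*w+1 < p^(k+1)"
  proof -
    have a: "int (2*w+1) = 2*(int P*int t + int u) + 1" using wP by simp
    have b: "int (p^(k+1)) = int p * int P" by (simp add: P_def)
    show ?thesis by (metis a b of_nat_less_iff)
  qed
  finally show ?thesis unfolding Ad_def using dat_eq t_def P_def by simp
qed


lemma Bd_char:
  assumes "2 \<le> p" "a < p" "w < p^(k+1)"
  shows "Bd p k a w = (if (p-1-a) * R p (k+1) < w then 1 else 0)"
proof -
  define P where "P = p^k"
  define q where "q = w div p"
  define r where "r = w mod p"
  define e where "e = p - 1 - a"
  define m where "m = e * R p k"
  have p0: "0 < p" using assms by simp
  have qP: "q < P" unfolding q_def P_def using divp_lt[OF assms(3) p0] .
  have rp: "r < p" unfolding r_def using p0 by simp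
  have wqr: "w = p*q + r" unfolding q_def r_def by simp
  have XX: "X p w = (p-1)*q + r" unfolding X_def q_def r_def by simp
  have PR: "P = (p-1) * R p k + 1" unfolding P_def using R_geom[of p k] assms by simp
  have ep: "e \<le> p - 1" unfolding e_def by simp
  have Xle: "X p w \<le> P*(p-1)"
  proof -
    have "(p-1)*q \<le> (p-1)*(P-1)" using qP by (intro mult_left_mono) auto
    moreover have "(p-1)*(P-1) + (p-1) = P*(p-1)"
    proof -
      have "(p-1)*(P-1) + (p-1) = (p-1)*((P-1)+1)" by (simp only: distrib_left mult_1_right)
      also have "(P-1)+1 = P" using qP by simp
      finally show ?thesis by (simp add: mult.commute)
    qed
    ultimately show ?thesis unfolding XX using rp by linarith
  qed
  have dat_eq: "dat (P*a, P*(p-1-a)) (P*(p-1) - X p w, X p w) \<longleftrightarrow> P*e < X p w"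
  proof -
    have "P*(p-1-a) = P*(p-1) - P*a" by (simp add: diff_mult_distrib2)
    moreover have "P*a \<le> P*(p-1)" using assms(2) by (intro mult_left_mono) auto
    ultimately show ?thesis unfolding dat_def e_def using Xle by auto
  qed
  have Pe: "P*e = (p-1)*m + e" unfolding m_def PR by (simp add: algebra_simps)
  have Re: "e * R p (k+1) = p*m + e" unfolding m_def using R_Suc'[of p k] by (simp add: algebra_simps)
  have mq: "e = p - 1 \<longrightarrow> q \<le> m"
  proof
    assume "e = p - 1"
    hence "m = P - 1" unfolding m_def using PR by simp
    thus "q \<le> m" using qP by simp
  qed
  have "P*e < X p w \<longleftrightarrow> int (p-1)*int m + int e < int (p-1) * int q + int r"
    unfolding Pe XX by (metis of_nat_add of_nat_less_iff of_nat_mult)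
  also have "\<dots> \<longleftrightarrow> (int p - 1)*int m + int e < (int p - 1) * int q + int r"
    using assms by (simp add: of_nat_diff)
  also have "\<dots> \<longleftrightarrow> int p*int m + int e < int p * int q + int r"
    by (rule key_even) (use assms ep rp mq in \<open>auto simp: of_nat_diff\<close>)
  also have "\<dots> \<longleftrightarrow> e * R p (k+1) < w"
    unfolding Re wqr by (metis of_nat_add of_nat_less_iff of_nat_mult)
  finally show ?thesis unfolding Bd_def using dat_eq P_def e_def by simp
qed


lemma sum_split:
  fixes f :: "nat \<Rightarrow> 'a::comm_monoid_add" and N M :: nat
  shows "(\<Sum>x<N*M. f x) = (\<Sum>u<N. \<Sum>a<M. f (u*M + a))"
proof -
  have "(\<Sum>x<N*M. f x) = (\<Sum>u<N. sum f {u*M..<u*M+M})" using sum.nat_group[of f M N] by simp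
  also have "\<dots> = (\<Sum>u<N. \<Sum>a<M. f (u*M + a))"
  proof (rule sum.cong[OF refl])
    fix u assume "u \<in> {..<N}"
    have "sum f {0 + u*M..<M + u*M} = (\<Sum>a\<in>{0..<M}. f (a + u*M))" by (rule sum.shift_bounds_nat_ivl)
    thus "sum f {u*M..<u*M+M} = (\<Sum>a<M. f (u*M + a))" by (simp add: add.commute atLeast0LessThan)
  qed
  finally show ?thesis .
qed

lemma sum_mod:
  fixes g :: "nat \<Rightarrow> nat" and N M :: nat
  shows "(\<Sum>U<N*M. g (U mod M)) = N * (\<Sum>a<M. g a)"
proof -
  have "(\<Sum>U<N*M. g (U mod M)) = (\<Sum>u<N. \<Sum>a<M. g ((u*M + a) mod M))" by (rule sum_split)
  also have "\<dots> = (\<Sum>u<N. \<Sum>a<M. g a)" by (intro sum.cong refl) simp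
  finally show ?thesis by simp
qed

definition hh :: "nat \<Rightarrow> nat" where "hh p = (p - 1) div 2"

definition Anw :: "nat \<Rightarrow> nat \<Rightarrow> nat \<Rightarrow> nat" where
  "Anw p k w = (if w < hh p * R p (k+1) then 1 else 0)"

definition Bnw :: "nat \<Rightarrow> nat \<Rightarrow> nat \<Rightarrow> nat \<Rightarrow> nat" where
  "Bnw p k a w = (if (p-1-a) * R p (k+1) < w then 1 else 0)"

definition Psi :: "nat \<Rightarrow> nat \<Rightarrow> nat \<Rightarrow> nat \<Rightarrow> nat" where
  "Psi p k s D = (\<Sum>j<s-1. Anw p k ((D div p^j) mod p^(k+1)))
     + (\<Sum>j<s-2. Bnw p k ((D div p^(j+k+1)) mod p) ((D div p^j) mod p^(k+1)))"

lemma hh2: "odd p \<Longrightarrow> 2 * hh p = p - 1"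
  unfolding hh_def by (auto elim!: oddE)

lemma Ad_Anw:
  assumes "odd p" "3 \<le> p" "1 \<le> k" "w < p^(k+1)"
  shows "Ad p k w = Anw p k w"
proof -
  have "p^(k+1) = 2 * hh p * R p (k+1) + 1" using R_geom[of p "k+1"] hh2[OF assms(1)] assms(2) by simp
  hence "2*w+1 < p^(k+1) \<longleftrightarrow> w < hh p * R p (k+1)" by simp
  thus ?thesis unfolding Ad_char[OF assms] Anw_def by simp
qed

lemma Bd_Bnw: "2 \<le> p \<Longrightarrow> a < p \<Longrightarrow> w < p^(k+1) \<Longrightarrow> Bd p k a w = Bnw p k a w"
  unfolding Bd_char Bnw_def by simp

lemma Psi_1: "Psi p k (Suc 0) D = 0" by (simp add: Psi_def)

lemma Psi_rec:
  assumes "1 \<le> s"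
  shows "Psi p k (Suc s) D = Psi p k s (D div p) + Anw p k (D mod p^(k+1))
     + (if 2 \<le> s then Bnw p k ((D div p^(k+1)) mod p) (D mod p^(k+1)) else 0)"
proof -
  have dv: "\<And>j. D div p^(Suc j) = D div p div p^j" by (simp add: div_mult2_eq)
  have A: "(\<Sum>j<s. Anw p k ((D div p^j) mod p^(k+1))) = Anw p k (D mod p^(k+1)) + (\<Sum>j<s-1. Anw p k ((D div p div p^j) mod p^(k+1)))"
  proof -
    have "s = Suc (s-1)" using assms by simp
    hence "(\<Sum>j<s. Anw p k ((D div p^j) mod p^(k+1))) = (\<Sum>j<Suc (s-1). Anw p k ((D div p^j) mod p^(k+1)))" by simp
    also have "\<dots> = Anw p k (D mod p^(k+1)) + (\<Sum>j<s-1. Anw p k ((D div p^(Suc j)) mod p^(k+1)))"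
      by (subst sum.lessThan_Suc_shift) simp
    finally show ?thesis by (simp only: dv)
  qed
  have B: "(\<Sum>j<s-1. Bnw p k ((D div p^(j+k+1)) mod p) ((D div p^j) mod p^(k+1)))
    = (if 2 \<le> s then Bnw p k ((D div p^(k+1)) mod p) (D mod p^(k+1)) else 0)
      + (\<Sum>j<s-2. Bnw p k ((D div p div p^(j+k+1)) mod p) ((D div p div p^j) mod p^(k+1)))"
  proof (cases "2 \<le> s")
    case True
    hence "s - 1 = Suc (s-2)" by simp
    hence "(\<Sum>j<s-1. Bnw p k ((D div p^(j+k+1)) mod p) ((D div p^j) mod p^(k+1)))
       = (\<Sum>j<Suc (s-2). Bnw p k ((D div p^(j+k+1)) mod p) ((D div p^j) mod p^(k+1)))" by simp
    also have "\<dots> = Bnw p k ((D div p^(k+1)) mod p) (D mod p^(k+1))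
       + (\<Sum>j<s-2. Bnw p k ((D div p^(Suc j+k+1)) mod p) ((D div p^(Suc j)) mod p^(k+1)))"
      by (subst sum.lessThan_Suc_shift) simp
    also have "(\<Sum>j<s-2. Bnw p k ((D div p^(Suc j+k+1)) mod p) ((D div p^(Suc j)) mod p^(k+1)))
       = (\<Sum>j<s-2. Bnw p k ((D div p div p^(j+k+1)) mod p) ((D div p div p^j) mod p^(k+1)))"
    proof -
      have "\<And>j. Suc j + k + 1 = Suc (j + k + 1)" by simp
      thus ?thesis by (simp only: dv)
    qed
    finally show ?thesis using True by simp
  next
    case False
    hence "s - 1 = 0" "s - 2 = 0" using assms by auto
    thus ?thesis using False by simp
  qed
  show ?thesis unfolding Psi_def using A B by (simp add: algebra_simps)
qed


lemma D_facts:
  fixes p k U a l :: nat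
  assumes "0 < p" "a < p" "l < p^k"
  defines "D \<equiv> (U*p + a)*p^k + l"
  shows "D mod p^(k+1) = a*p^k + l" "(D div p^(k+1)) mod p = U mod p"
    "D div p = U*p^k + (a*p^k + l) div p"
proof -
  have w: "a*p^k + l < p^(k+1)" using win_lt[OF assms(2,3)] .
  have D2: "D = U * p^(k+1) + (a*p^k + l)" unfolding D_def by (simp add: algebra_simps)
  show "D mod p^(k+1) = a*p^k + l" unfolding D2 using w by simp
  show "(D div p^(k+1)) mod p = U mod p" unfolding D2 using w assms(1) by simp
  have D3: "D = (a*p^k + l) + (U*p^k) * p" unfolding D2 by (simp add: algebra_simps)
  show "D div p = U*p^k + (a*p^k + l) div p" unfolding D3 using assms(1) by simp
qed

lemma FV_formula:
  assumes "odd p" "3 \<le> p" "1 \<le> k" "1 \<le> s" "l < p^k"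
  shows "fibM p k (Vv s l) = hh p * p^(s-1) + (p-1) * (\<Sum>U<p^(s-1). Psi p k s (U*p^k + l))"
  using assms(4,5)
proof (induction s arbitrary: l rule: nat_induct_at_least)
  case base
  thus ?case using FV1[OF base assms(1)] assms(2) by (simp add: hh_def Psi_1)
next
  case (Suc n)
  have p2: "2 \<le> p" and p0: "0 < p" using assms by auto
  define w where "w = (\<lambda>a. a*p^k + l)"
  have wl: "\<And>a. a < p \<Longrightarrow> w a < p^(k+1)" unfolding w_def using win_lt Suc.prems by blast
  have wd: "\<And>a. a < p \<Longrightarrow> w a div p < p^k" using divp_lt[OF wl p0] by blast
  define T where "T = (\<lambda>a. (\<Sum>U<p^(n-1). Psi p k n (U*p^k + w a div p))
      + (if 2 \<le> n then p^(n-2) * (\<Sum>a'<p. Bnw p k a' (w a)) else 0) + p^(n-1) * Anw p k (w a))"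
  have step: "fibM p k (Wv (Suc n) (w a)) + (p-1)*p^(Suc n - 2) * Ad p k (w a) = hh p * p^(n-1) + (p-1) * T a"
    if a: "a < p" for a
  proof -
    have "fibM p k (Wv (Suc n) (w a)) = fibM p k (Vv n (w a div p)) + (if 3 \<le> Suc n then (p-1)*p^(Suc n-3) * (\<Sum>a'<p. Bd p k a' (w a)) else 0)"
      using FW_rec[of "Suc n" "w a" p k] Suc.hyps wl[OF a] p2 by simp
    also have "fibM p k (Vv n (w a div p)) = hh p * p^(n-1) + (p-1) * (\<Sum>U<p^(n-1). Psi p k n (U*p^k + w a div p))"
      using Suc.IH[OF wd[OF a]] .
    also have "(\<Sum>a'<p. Bd p k a' (w a)) = (\<Sum>a'<p. Bnw p k a' (w a))"
      using Bd_Bnw[OF p2 _ wl[OF a]] by (intro sum.cong refl) auto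
    finally have fw: "fibM p k (Wv (Suc n) (w a)) = hh p * p ^ (n - 1) +
       (p - 1) * (\<Sum>U<p ^ (n - 1). Psi p k n (U * p ^ k + w a div p)) +
       (if 3 \<le> Suc n then (p - 1) * p ^ (Suc n - 3) * (\<Sum>a'<p. Bnw p k a' (w a)) else 0)" .
    have ad: "Ad p k (w a) = Anw p k (w a)" using Ad_Anw[OF assms(1,2,3) wl[OF a]] .
    obtain m where nm: "n = Suc m" using Suc.hyps by (cases n) auto
    have e1: "Suc n - 3 = n - 2" "Suc n - 2 = n - 1" "(3 \<le> Suc n) = (2 \<le> n)" using nm by auto
    show ?thesis unfolding T_def fw ad e1
      by (cases "2 \<le> n") (simp_all only: if_True if_False distrib_left mult_0_right add_0_right mult.assoc add.assoc)
  qed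
  have "fibM p k (Vv (Suc n) l) = (\<Sum>a<p. fibM p k (Wv (Suc n) (w a)) + (p-1)*p^(Suc n - 2) * Ad p k (w a))"
    using FV_rec[of "Suc n" l p k] Suc.hyps Suc.prems p2 unfolding w_def by simp
  also have "\<dots> = (\<Sum>a<p. hh p * p^(n-1) + (p-1) * T a)" using step by (intro sum.cong refl) auto
  also have "\<dots> = hh p * p^n + (p-1) * (\<Sum>a<p. T a)"
  proof -
    have pn: "p^n = p^(n-1) * p" using Suc.hyps by (cases n) auto
    show ?thesis by (simp add: sum.distrib sum_distrib_left pn)
  qed
  also have "(\<Sum>a<p. T a) = (\<Sum>U<p^n. Psi p k (Suc n) (U*p^k + l))"
  proof -
    have pn: "p^n = p^(n-1) * p" using Suc.hyps by (cases n) auto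
    have "(\<Sum>U<p^n. Psi p k (Suc n) (U*p^k + l)) = (\<Sum>U<p^(n-1). \<Sum>a<p. Psi p k (Suc n) ((U*p + a)*p^k + l))"
      unfolding pn by (rule sum_split)
    also have "\<dots> = (\<Sum>U<p^(n-1). \<Sum>a<p. Psi p k n (U*p^k + w a div p) + Anw p k (w a)
         + (if 2 \<le> n then Bnw p k (U mod p) (w a) else 0))"
    proof (intro sum.cong refl)
      fix U a assume "a \<in> {..<p}"
      hence a: "a < p" by simp
      note df = D_facts[OF p0 a Suc.prems, of U]
      show "Psi p k (Suc n) ((U*p + a)*p^k + l) = Psi p k n (U*p^k + w a div p) + Anw p k (w a)
         + (if 2 \<le> n then Bnw p k (U mod p) (w a) else 0)"
        unfolding Psi_rec[OF Suc.hyps] df w_def ..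
    qed
    also have "\<dots> = (\<Sum>a<p. \<Sum>U<p^(n-1). Psi p k n (U*p^k + w a div p) + Anw p k (w a)
         + (if 2 \<le> n then Bnw p k (U mod p) (w a) else 0))"
      by (rule sum.swap)
    also have "\<dots> = (\<Sum>a<p. T a)"
    proof (intro sum.cong refl)
      fix a assume "a \<in> {..<p}"
      have bn: "2 \<le> n \<Longrightarrow> (\<Sum>U<p^(n-1). Bnw p k (U mod p) (w a)) = p^(n-2) * (\<Sum>a'<p. Bnw p k a' (w a))"
      proof -
        assume "2 \<le> n"
        then obtain m where "n = Suc (Suc m)" by (metis add_2_eq_Suc le_Suc_ex)
        hence "p^(n-1) = p^(n-2) * p" by simp
        thus ?thesis using sum_mod[where g="\<lambda>x. Bnw p k x (w a)" and N="p^(n-2)" and M=p] by simp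
      qed
      show "(\<Sum>U<p^(n-1). Psi p k n (U*p^k + w a div p) + Anw p k (w a)
         + (if 2 \<le> n then Bnw p k (U mod p) (w a) else 0)) = T a"
        unfolding T_def using bn by (cases "2 \<le> n") (simp_all add: sum.distrib)
    qed
    finally show ?thesis by simp
  qed
  finally show ?case by simp
qed


lemma lex_less:
  fixes a b X Y Q :: nat
  assumes "X < Q" "Y < Q"
  shows "a*Q + X < b*Q + Y \<longleftrightarrow> a < b \<or> (a = b \<and> X < Y)"
proof (cases a b rule: linorder_cases)
  case less
  hence "a*Q + X < (a+1)*Q" using assms by simp
  also have "\<dots> \<le> b*Q" using less by (intro mult_right_mono) auto
  finally show ?thesis using less by simp
next
  case equal thus ?thesis by simp
next
  case greater
  hence "b*Q + Y < (b+1)*Q" using assms by simp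
  also have "\<dots> \<le> a*Q" using greater by (intro mult_right_mono) auto
  finally show ?thesis using greater by simp
qed

lemma sum_if_eq: "b < (N::nat) \<Longrightarrow> (\<Sum>a<N. if a = b then c else 0) = (c::nat)"
  by (subst sum.delta) simp_all

lemma sum_if_ge: "(\<Sum>a<N. if a < m then 0 else 1) = N - min N (m::nat)"
  by (induction N) auto

lemma cnt_less:
  fixes b N X Y Q :: nat
  assumes "b < N" "X < Q" "Y < Q"
  shows "(\<Sum>a<N. if a*Q + X < b*Q + Y then 1 else 0) = b + (if X < Y then 1 else 0)"
proof -
  have "(\<Sum>a<N. if a*Q + X < b*Q + Y then 1 else 0) = (\<Sum>a<N. (if a < b then 1 else 0) + (if a = b then (if X < Y then 1 else 0) else 0))"
    using lex_less[OF assms(2,3)] by (intro sum.cong refl) auto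
  also have "\<dots> = b + (if X < Y then 1 else 0)"
    using assms(1) by (simp add: sum.distrib sum_if_less sum_if_eq[OF assms(1)])
  finally show ?thesis .
qed

lemma cnt_greater:
  fixes b N X Y Q :: nat
  assumes "b < N" "X < Q" "Y < Q"
  shows "(\<Sum>a<N. if b*Q + Y < a*Q + X then 1 else 0) = (N - 1 - b) + (if Y < X then 1 else 0)"
proof -
  have "(\<Sum>a<N. if b*Q + Y < a*Q + X then 1 else 0) = (\<Sum>a<N. (if a < Suc b then 0 else 1) + (if a = b then (if Y < X then 1 else 0) else 0))"
    using lex_less[OF assms(3,2)] by (intro sum.cong refl) auto
  also have "\<dots> = (N - 1 - b) + (if Y < X then 1 else 0)"
    using assms(1) by (simp only: sum.distrib sum_if_ge sum_if_eq[OF assms(1)])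
  finally show ?thesis .
qed

lemma win_odd:
  fixes p k j U l :: nat
  assumes "0 < p" "j \<le> k" "l < p^k"
  shows "((U*p^k + l) div p^j) mod p^(k+1) = (U mod p^(j+1)) * p^(k-j) + l div p^j"
proof -
  have Pk: "p^k = p^(k-j) * p^j" using assms(2) by (simp flip: power_add)
  have c: "l div p^j < p^(k-j)" using assms Pk by (simp add: div_less_iff_less_mult)
  have d: "(U*p^k + l) div p^j = U*p^(k-j) + l div p^j" unfolding Pk using assms(1)
    by (simp add: mult.assoc[symmetric] div_mult_self1 add.commute)
  have e: "p^(k+1) = p^(k-j) * p^(j+1)" using assms(2) by (simp flip: power_add)
  have "((U*p^k + l) div p^j) mod p^(k+1) = p^(k-j) * ((U*p^(k-j) + l div p^j) div p^(k-j) mod p^(j+1)) + (U*p^(k-j) + l div p^j) mod p^(k-j)"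
    unfolding d e by (rule mod_mult2_eq)
  also have "\<dots> = p^(k-j) * (U mod p^(j+1)) + l div p^j" using c assms(1) by simp
  finally show ?thesis by (simp add: mult.commute)
qed

lemma top_even:
  fixes p k j U l :: nat
  assumes "0 < p" "l < p^k"
  shows "((U*p^k + l) div p^(j+k+1)) mod p = (U div p^(j+1)) mod p"
proof -
  have jk: "j+k+1 = k + (j+1)" by simp
  have "p^(j+k+1) = p^k * p^(j+1)" unfolding jk by (rule power_add)
  hence "(U*p^k + l) div p^(j+k+1) = (U*p^k + l) div p^k div p^(j+1)" by (simp only: div_mult2_eq)
  also have "(U*p^k + l) div p^k = U" using assms by simp
  finally show ?thesis by simp
qed


definition Ec :: "nat \<Rightarrow> nat \<Rightarrow> nat \<Rightarrow> nat" where
  "Ec p c g = (\<Sum>e<p. if e * R p g < c then 1 else 0)"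

lemma hh_le: "odd p \<Longrightarrow> hh p \<le> p - 1" unfolding hh_def by simp

lemma odd_count:
  assumes "odd p" "3 \<le> p" "j \<le> k" "l < p^k"
  shows "(\<Sum>U<p^(k+1). Anw p k (((U*p^k + l) div p^j) mod p^(k+1)))
     = p^(k-j) * (hh p * R p (j+1) + (if l div p^j < hh p * R p (k-j) then 1 else 0))"
proof -
  have p0: "0 < p" using assms by simp
  define c where "c = l div p^j"
  define Q where "Q = p^(k-j)"
  have Pk: "p^k = p^(k-j) * p^j" using assms(3) by (simp flip: power_add)
  have cQ: "c < Q" unfolding c_def Q_def using assms p0 Pk by (simp add: div_less_iff_less_mult)
  have e: "p^(k+1) = Q * p^(j+1)" unfolding Q_def using assms(3) by (simp flip: power_add)
  have "(\<Sum>U<p^(k+1). Anw p k (((U*p^k + l) div p^j) mod p^(k+1))) = (\<Sum>U<p^(k+1). Anw p k ((U mod p^(j+1)) * Q + c))"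
    unfolding c_def Q_def using win_odd[OF p0 assms(3,4)] by simp
  also have "\<dots> = Q * (\<Sum>a<p^(j+1). Anw p k (a * Q + c))"
    unfolding e by (rule sum_mod)
  also have "(\<Sum>a<p^(j+1). Anw p k (a * Q + c)) = (\<Sum>a<p^(j+1). if a*Q + c < (hh p * R p (j+1))*Q + hh p * R p (k-j) then 1 else 0)"
  proof -
    have "R p (k+1) = R p (j+1) * Q + R p (k-j)" unfolding Q_def using R_add[of p "j+1" "k-j"] assms(3) by simp
    hence "hh p * R p (k+1) = (hh p * R p (j+1))*Q + hh p * R p (k-j)" by (simp add: algebra_simps)
    thus ?thesis unfolding Anw_def by simp
  qed
  also have "\<dots> = hh p * R p (j+1) + (if c < hh p * R p (k-j) then 1 else 0)"
  proof (rule cnt_less)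
    show "hh p * R p (j+1) < p^(j+1)" using tR_lt[of p "hh p" "j+1"] hh_le[OF assms(1)] p0 by simp
    show "c < Q" by (rule cQ)
    show "hh p * R p (k-j) < Q" unfolding Q_def using tR_lt[of p "hh p" "k-j"] hh_le[OF assms(1)] p0 by simp
  qed
  finally show ?thesis unfolding c_def Q_def .
qed

lemma gauss_p: "odd p \<Longrightarrow> (\<Sum>a<p. a) = p * hh p"
proof -
  assume o: "odd p"
  have "2 * (\<Sum>a<p. a) = p * (p - 1)"
  proof (induction p)
    case 0 thus ?case by simp
  next
    case (Suc n) thus ?case by (cases n) (auto simp: algebra_simps)
  qed
  thus ?thesis using hh2[OF o] by (metis mult.left_commute mult_cancel_left zero_neq_numeral)
qed

lemma even_count:
  assumes "odd p" "3 \<le> p" "j < k" "l < p^k"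
  shows "(\<Sum>U<p^(k+1). Bnw p k (((U*p^k + l) div p^(j+k+1)) mod p) (((U*p^k + l) div p^j) mod p^(k+1)))
     = p^(k-j-1) * (p * hh p * R p (j+1) + Ec p (l div p^j) (k-j))"
proof -
  have p0: "0 < p" using assms by simp
  define c where "c = l div p^j"
  define Q where "Q = p^(k-j)"
  define M where "M = p^(j+1)"
  have Pk: "p^k = p^(k-j) * p^j" using assms(3) by (simp flip: power_add)
  have cQ: "c < Q" unfolding c_def Q_def using assms p0 Pk by (simp add: div_less_iff_less_mult)
  define g where "g = (\<lambda>b. Bnw p k (b div M) ((b mod M)*Q + c))"
  have e: "p^(k+1) = p^(k-j-1) * (p*M)" unfolding M_def using assms(3)
    by (simp flip: power_add power_Suc add: Suc_diff_Suc)
  have gU: "Bnw p k (((U*p^k + l) div p^(j+k+1)) mod p) (((U*p^k + l) div p^j) mod p^(k+1)) = g (U mod (p*M))" for U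
  proof -
    have m2: "U mod (M*p) = M * (U div M mod p) + U mod M" by (rule mod_mult2_eq)
    have M0: "0 < M" unfolding M_def using p0 by simp
    have a: "(U mod (p*M)) div M = (U div M) mod p" using m2 M0 by (simp add: mult.commute)
    have b: "(U mod (p*M)) mod M = U mod M" using m2 M0 by (simp add: mult.commute)
    show ?thesis unfolding g_def a b by (simp only: top_even[OF p0 assms(4)] win_odd[OF p0 less_imp_le[OF assms(3)] assms(4)] M_def Q_def c_def)
  qed
  have "(\<Sum>U<p^(k+1). Bnw p k (((U*p^k + l) div p^(j+k+1)) mod p) (((U*p^k + l) div p^j) mod p^(k+1)))
      = (\<Sum>U<p^(k+1). g (U mod (p*M)))" using gU by simp
  also have "\<dots> = p^(k-j-1) * (\<Sum>b<p*M. g b)" unfolding e by (rule sum_mod)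
  also have "(\<Sum>b<p*M. g b) = (\<Sum>a0<p. \<Sum>a'<M. g (a0*M + a'))" by (rule sum_split)
  also have "\<dots> = (\<Sum>a0<p. a0 * R p (j+1) + (if (p-1-a0) * R p (k-j) < c then 1 else 0))"
  proof (rule sum.cong[OF refl])
    fix a0 assume "a0 \<in> {..<p}"
    hence a0: "a0 < p" by simp
    define ee where "ee = p - 1 - a0"
    have ee: "ee \<le> p - 1" unfolding ee_def by simp
    have "(\<Sum>a'<M. g (a0*M + a')) = (\<Sum>a'<M. if (ee * R p (j+1))*Q + ee * R p (k-j) < a'*Q + c then 1 else 0)"
    proof (rule sum.cong[OF refl])
      fix a' assume "a' \<in> {..<M}"
      hence "a' < M" by simp
      hence "(a0*M + a') div M = a0" "(a0*M + a') mod M = a'" by simp_all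
      moreover have "ee * R p (k+1) = (ee * R p (j+1))*Q + ee * R p (k-j)"
        unfolding Q_def using R_add[of p "j+1" "k-j"] assms(3) by (simp add: algebra_simps)
      ultimately show "g (a0*M + a') = (if (ee * R p (j+1))*Q + ee * R p (k-j) < a'*Q + c then 1 else 0)"
        unfolding g_def Bnw_def ee_def by simp
    qed
    also have "\<dots> = (M - 1 - ee * R p (j+1)) + (if ee * R p (k-j) < c then 1 else 0)"
    proof (rule cnt_greater)
      show "ee * R p (j+1) < M" unfolding M_def using tR_lt[of p ee "j+1"] ee p0 by simp
      show "c < Q" by (rule cQ)
      show "ee * R p (k-j) < Q" unfolding Q_def using tR_lt[of p ee "k-j"] ee p0 by simp
    qed
    also have "M - 1 - ee * R p (j+1) = a0 * R p (j+1)"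
    proof -
      have "M - 1 = (p-1) * R p (j+1)" unfolding M_def using R_geom[of p "j+1"] p0 by simp
      moreover have "p - 1 = a0 + ee" unfolding ee_def using a0 by simp
      ultimately have "M - 1 - ee * R p (j+1) = (a0 + ee) * R p (j+1) - ee * R p (j+1)" by simp
      also have "\<dots> = a0 * R p (j+1)" by (simp add: add_mult_distrib)
      finally show ?thesis .
    qed
    finally show "(\<Sum>a'<M. g (a0*M + a')) = a0 * R p (j+1) + (if (p-1-a0) * R p (k-j) < c then 1 else 0)"
      unfolding ee_def .
  qed
  also have "\<dots> = p * hh p * R p (j+1) + Ec p c (k-j)"
  proof -
    have "(\<Sum>a0<p. a0 * R p (j+1)) = p * hh p * R p (j+1)"
      using gauss_p[OF assms(1)] by (simp add: sum_distrib_right[symmetric])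
    moreover have "(\<Sum>a0<p. if (p-1-a0) * R p (k-j) < c then 1 else 0) = Ec p c (k-j)"
      unfolding Ec_def using sum.nat_diff_reindex[of "\<lambda>e. if e * R p (k-j) < c then 1 else 0" p] by simp
    ultimately show ?thesis by (simp add: sum.distrib)
  qed
  finally show ?thesis unfolding c_def .
qed


definition Xc :: "nat \<Rightarrow> nat \<Rightarrow> nat \<Rightarrow> nat \<Rightarrow> nat" where
  "Xc p k l j = (if l div p^j < hh p * R p (k-j) then 1 else 0)"

lemma fib_counts:
  assumes "odd p" "3 \<le> p" "1 \<le> k" "l < p^k"
  shows "fibM p k (Vv (k+2) l) = hh p * p^(k+1) + (p-1) * ((\<Sum>j<k+1. p^(k-j) * (hh p * R p (j+1) + Xc p k l j))
     + (\<Sum>j<k. p^(k-j-1) * (p * hh p * R p (j+1) + Ec p (l div p^j) (k-j))))"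
proof -
  have "fibM p k (Vv (k+2) l) = hh p * p^(k+1) + (p-1) * (\<Sum>U<p^(k+1). Psi p k (k+2) (U*p^k + l))"
    using FV_formula[OF assms(1,2,3) _ assms(4), of "k+2"] by simp
  also have "(\<Sum>U<p^(k+1). Psi p k (k+2) (U*p^k + l))
     = (\<Sum>j<k+1. \<Sum>U<p^(k+1). Anw p k (((U*p^k + l) div p^j) mod p^(k+1)))
     + (\<Sum>j<k. \<Sum>U<p^(k+1). Bnw p k (((U*p^k + l) div p^(j+k+1)) mod p) (((U*p^k + l) div p^j) mod p^(k+1)))"
  proof -
    have kk: "k+2-1 = k+1" "k+2-2 = k" by simp_all
    show ?thesis unfolding Psi_def kk sum.distrib by (rule arg_cong2[where f="(+)"]; rule sum.swap)
  qed
  also have "(\<Sum>j<k+1. \<Sum>U<p^(k+1). Anw p k (((U*p^k + l) div p^j) mod p^(k+1)))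
     = (\<Sum>j<k+1. p^(k-j) * (hh p * R p (j+1) + Xc p k l j))"
    unfolding Xc_def using odd_count[OF assms(1,2) _ assms(4)] by (intro sum.cong refl) auto
  also have "(\<Sum>j<k. \<Sum>U<p^(k+1). Bnw p k (((U*p^k + l) div p^(j+k+1)) mod p) (((U*p^k + l) div p^j) mod p^(k+1)))
     = (\<Sum>j<k. p^(k-j-1) * (p * hh p * R p (j+1) + Ec p (l div p^j) (k-j)))"
    using even_count[OF assms(1,2) _ assms(4)] by (intro sum.cong refl) auto
  finally show ?thesis .
qed

lemma sum_pow_rev: "(\<Sum>j<n+1. p^(n-j)) = R p (n+1)"
  unfolding R_def using sum.nat_diff_reindex[of "\<lambda>i. p^i" "n+1"] by simp

lemma alg_master:
  fixes H s1 s2 r P x y f K :: int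
  assumes "f = H*P + (2*H)*(H*s1 + x + (H*s2 + y))" "(2*H)*s1 + r = K*P" "s2 + r = s1" "r*(2*H) + 1 = P"
  shows "f = H*(2*K*P - 1 + 2 - 2*r + 2*x + 2*y)"
  using assms by algebra

lemma master:
  assumes "odd p" "3 \<le> p" "1 \<le> k" "l < p^k"
  defines "XX \<equiv> (\<Sum>j<k+1. p^(k-j) * Xc p k l j)"
    and "YY \<equiv> (\<Sum>j<k. p^(k-j-1) * Ec p (l div p^j) (k-j))"
  shows "int (fibM p k (Vv (k+2) l)) = int (hh p) * (2*(int k+1)*int p^(k+1) - 1 + 2 - 2 * int (R p (k+1)) + 2*int XX + 2*int YY)"
proof -
  define S1 where "S1 = (\<Sum>j<k+1. p^(k-j) * R p (j+1))"
  define S2 where "S2 = (\<Sum>j<k. p^(k-j) * R p (j+1))"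
  have p1: "1 \<le> p" using assms by simp
  have A: "(\<Sum>j<k+1. p^(k-j) * (hh p * R p (j+1) + Xc p k l j)) = hh p * S1 + XX"
    unfolding S1_def XX_def by (simp add: sum.distrib sum_distrib_left algebra_simps)
  have B: "(\<Sum>j<k. p^(k-j-1) * (p * hh p * R p (j+1) + Ec p (l div p^j) (k-j))) = hh p * S2 + YY"
  proof -
    have "(\<Sum>j<k. p^(k-j-1) * (p * hh p * R p (j+1) + Ec p (l div p^j) (k-j)))
       = (\<Sum>j<k. hh p * (p^(k-j) * R p (j+1)) + p^(k-j-1) * Ec p (l div p^j) (k-j))"
    proof (rule sum.cong[OF refl])
      fix j assume "j \<in> {..<k}"
      hence "k - j = Suc (k-j-1)" by simp
      hence e: "p^(k-j) = p * p^(k-j-1)" by (metis power_Suc)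
      have "p^(k-j-1)*(p*hh p*R p (j+1)) = hh p*(p^(k-j)*R p (j+1))" unfolding e by (simp add: algebra_simps)
      thus "p^(k-j-1) * (p * hh p * R p (j+1) + Ec p (l div p^j) (k-j)) = hh p * (p^(k-j) * R p (j+1)) + p^(k-j-1) * Ec p (l div p^j) (k-j)"
        by (simp add: distrib_left)
    qed
    thus ?thesis unfolding S2_def YY_def by (simp add: sum.distrib sum_distrib_left)
  qed
  have I1: "(p-1)*S1 + R p (k+1) = (k+1)*p^(k+1)"
  proof -
    have "(p-1)*S1 + R p (k+1) = (\<Sum>j<k+1. p^(k-j) * ((p-1) * R p (j+1) + 1))"
      unfolding S1_def sum_pow_rev[symmetric] by (simp add: sum_distrib_left sum.distrib algebra_simps)
    also have "\<dots> = (\<Sum>j<k+1. p^(k+1))"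
    proof (intro sum.cong refl)
      fix j assume "j \<in> {..<k+1}"
      hence "k - j + (j+1) = k+1" by simp
      thus "p^(k-j) * ((p-1) * R p (j+1) + 1) = p^(k+1)" using R_geom[OF p1, of "j+1"] by (metis power_add)
    qed
    finally show ?thesis by simp
  qed
  have I2: "S2 + R p (k+1) = S1" unfolding S1_def S2_def by simp
  have G: "int (R p (k+1)) * int (p-1) + 1 = int p^(k+1)"
    using R_geom[OF p1, of "k+1"] by (metis of_nat_1 of_nat_add of_nat_mult of_nat_power mult.commute)
  have h2: "int (p-1) = 2 * int (hh p)" using hh2[OF assms(1)] by simp
  have "fibM p k (Vv (k+2) l) = hh p * p^(k+1) + (p-1) * (hh p * S1 + XX + (hh p * S2 + YY))"
    using fib_counts[OF assms(1-4)] A B by simp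
  hence "int (fibM p k (Vv (k+2) l)) = int (hh p) * int p^(k+1) + int (p-1) * (int (hh p) * int S1 + int XX + (int (hh p) * int S2 + int YY))"
    by simp
  moreover have "int (p-1) * int S1 + int (R p (k+1)) = (int k + 1) * int p^(k+1)"
    using I1 by (metis of_nat_add of_nat_mult of_nat_power of_nat_Suc Suc_eq_plus1 add.commute)
  moreover have "int S2 + int (R p (k+1)) = int S1" using I2 by simp
  ultimately show ?thesis
    using alg_master[of "int (fibM p k (Vv (k+2) l))" "int (hh p)" "int p^(k+1)" "int S1" "int XX" "int S2" "int YY"
        "int (R p (k+1))" "int k + 1"] G h2 by simp
qed


lemma Ec_val:
  assumes "1 \<le> t" "t \<le> p" "(t-1)*R p g < c" "c \<le> t*R p g"
  shows "Ec p c g = t"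
proof -
  have "Ec p c g = (\<Sum>e<p. if e < t then 1 else 0)"
    unfolding Ec_def
  proof (intro sum.cong refl)
    fix e
    show "(if e * R p g < c then 1 else 0) = (if e < t then 1 else (0::nat))"
    proof (cases "e < t")
      case True
      hence "e * R p g \<le> (t-1) * R p g" by (intro mult_right_mono) auto
      hence "e * R p g < c" using assms(3) by linarith
      thus ?thesis using True by simp
    next
      case False
      hence "t * R p g \<le> e * R p g" by (intro mult_right_mono) auto
      hence "\<not> e * R p g < c" using assms(4) by linarith
      thus ?thesis using False by simp
    qed
  qed
  also have "\<dots> = t" using assms(2) by (simp add: sum_if_less)
  finally show ?thesis .
qed

lemma Ec_0: "Ec p 0 g = 0" by (simp add: Ec_def)

lemma Ec_mult: "0 < g \<Longrightarrow> 0 < p \<Longrightarrow> t \<le> p \<Longrightarrow> Ec p (t * R p g) g = t"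
proof (cases "t = 0")
  case True thus ?thesis by (simp add: Ec_0)
next
  case False
  assume a: "0 < g" "0 < p" "t \<le> p"
  have "0 < R p g" using R_pos a by simp
  hence "(t-1)*R p g < t*R p g" using False by simp
  thus ?thesis using Ec_val[of t p g "t * R p g"] False a by simp
qed

lemma KI:
  assumes "1 \<le> t" "t \<le> p" "1 \<le> g"
  shows "(t-1)*R p g < t*p^(g-1)"
  using assms(3)
proof (induction g rule: nat_induct_at_least)
  case base thus ?case using assms by (simp add: R_def)
next
  case (Suc g)
  have "(t-1)*R p g + 1 \<le> t*p^(g-1)" using Suc.IH by simp
  hence "p*((t-1)*R p g + 1) \<le> p*(t*p^(g-1))" by (intro mult_left_mono) auto
  moreover have "p*(t*p^(g-1)) = t*p^g" using Suc.hyps by (cases g) auto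
  moreover have "p*((t-1)*R p g) + p = p*((t-1)*R p g + 1)" by (simp add: distrib_left)
  ultimately have "p*((t-1)*R p g) + p \<le> t*p^g" by linarith
  moreover have "(t-1)*R p (Suc g) = p*((t-1)*R p g) + (t-1)" by (simp add: R_Suc' algebra_simps)
  ultimately show ?case using assms by simp
qed

lemma divR:
  assumes "0 < p" "t \<le> p - 1"
  shows "(t * R p (a+b)) div p^b = t * R p a"
proof -
  have "t * R p (a+b) = (t * R p a) * p^b + t * R p b" by (simp add: R_add algebra_simps)
  moreover have "t * R p b < p^b" using tR_lt assms by simp
  ultimately show ?thesis using assms by simp
qed

lemma XXsum:
  assumes "m \<le> k+1"
  shows "(\<Sum>j<k+1. p^(k-j) * (if j < m then 1 else 0)) = p^(k+1-m) * R p m"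
  using assms
proof (induction m)
  case 0 thus ?case by simp
next
  case (Suc m)
  have "(\<Sum>j<k+1. p^(k-j) * (if j < Suc m then 1 else 0)) = (\<Sum>j<k+1. p^(k-j) * (if j < m then 1 else 0) + (if j = m then p^(k-m) else 0))"
    by (intro sum.cong refl) auto
  also have "\<dots> = p^(k+1-m) * R p m + p^(k-m)" using Suc by (simp add: sum.distrib sum.delta)
  also have "\<dots> = p^(k-m) * R p (Suc m)"
  proof -
    have "k+1-m = Suc (k-m)" using Suc.prems by simp
    thus ?thesis by (simp add: R_Suc' algebra_simps)
  qed
  also have "k-m = k+1 - Suc m" by simp
  finally show ?case .
qed

lemma sum_pow_rev2: "(\<Sum>j<k. p^(k-j-1)) = R p k"
  unfolding R_def using sum.nat_diff_reindex[of "\<lambda>i. p^i" k] by simp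

lemma sum_R_lt: "m \<le> n \<Longrightarrow> (\<Sum>e<n. p^e * (if e < m then 1 else 0)) = R p m"
proof (induction n)
  case 0 thus ?case by simp
next
  case (Suc n)
  show ?case
  proof (cases "m = Suc n")
    case True
    have "(\<Sum>e<Suc n. p^e * (if e < m then 1 else 0)) = (\<Sum>e<Suc n. p^e)" using True by (intro sum.cong refl) auto
    thus ?thesis using True by (simp add: R_def)
  next
    case False
    hence "m \<le> n" using Suc.prems by simp
    thus ?thesis using Suc.IH by simp
  qed
qed

lemma YYsum_b:
  assumes "i < k"
  shows "(\<Sum>j<k. p^(k-j-1) * (if i < j then 1 else 0)) = R p (k-1-i)"
proof -
  have "(\<Sum>j<k. p^(k-j-1) * (if i < j then 1 else 0)) = (\<Sum>j<k. (\<lambda>e. p^e * (if e < k-1-i then 1 else 0)) (k - Suc j))"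
    by (intro sum.cong refl) auto
  also have "\<dots> = (\<Sum>e<k. p^e * (if e < k-1-i then 1 else 0))" by (rule sum.nat_diff_reindex)
  also have "\<dots> = R p (k-1-i)" by (rule sum_R_lt) simp
  finally show ?thesis .
qed

lemma sum_ivl_int: "(\<Sum>x\<in>{a..b}. (int p)^x) = int (p^a * R p (Suc b - a))"
proof (cases "a \<le> b")
  case True
  have st: "{a..b} = {0 + a..<(Suc b - a) + a}" using True by auto
  have e2: "(\<Sum>x\<in>{0 + a..<(Suc b - a) + a}. (int p)^x) = (\<Sum>i\<in>{0..<Suc b - a}. (int p)^(i + a))"
    by (rule sum.shift_bounds_nat_ivl)
  have "(\<Sum>x\<in>{a..b}. (int p)^x) = (\<Sum>i\<in>{0..<Suc b - a}. (int p)^(i + a))"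
    unfolding st e2 ..
  also have "\<dots> = int (p^a * R p (Suc b - a))"
    by (simp add: R_def power_add sum_distrib_left atLeast0LessThan algebra_simps)
  finally show ?thesis .
next
  case False thus ?thesis by simp
qed


lemma Xc_k: "l < p^k \<Longrightarrow> Xc p k l k = 0"
  by (simp add: Xc_def)

lemma XX_from:
  assumes "\<And>j. j < k+1 \<Longrightarrow> Xc p k l j = (if j < m then 1 else 0)" "m \<le> k+1"
  shows "(\<Sum>j<k+1. p^(k-j) * Xc p k l j) = p^(k+1-m) * R p m"
proof -
  have "(\<Sum>j<k+1. p^(k-j) * Xc p k l j) = (\<Sum>j<k+1. p^(k-j) * (if j < m then 1 else 0))"
    using assms(1) by (intro sum.cong refl) auto
  thus ?thesis using XXsum[OF assms(2)] by simp
qed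

lemma YY_const:
  assumes "\<And>j. j < k \<Longrightarrow> Ec p (l div p^j) (k-j) = t"
  shows "(\<Sum>j<k. p^(k-j-1) * Ec p (l div p^j) (k-j)) = t * R p k"
proof -
  have "(\<Sum>j<k. p^(k-j-1) * Ec p (l div p^j) (k-j)) = (\<Sum>j<k. t * p^(k-j-1))"
    using assms by (intro sum.cong refl) auto
  thus ?thesis using sum_pow_rev2[of p k] by (simp add: sum_distrib_left[symmetric])
qed

lemma hh_pos: "odd p \<Longrightarrow> 3 \<le> p \<Longrightarrow> 1 \<le> hh p" unfolding hh_def by (auto elim!: oddE)

lemma div_ge: "a * d \<le> x \<Longrightarrow> 0 < (d::nat) \<Longrightarrow> a \<le> x div d"
  using div_le_mono[of "a*d" x d] by simp

lemma case_e:
  assumes "odd p" "3 \<le> p" "1 \<le> k" "l = hh p * R p k"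
  shows "(\<Sum>j<k+1. p^(k-j) * Xc p k l j) = 0 \<and> (\<Sum>j<k. p^(k-j-1) * Ec p (l div p^j) (k-j)) = hh p * R p k"
proof -
  have p0: "0 < p" using assms by simp
  have hl: "hh p \<le> p - 1" using hh_le[OF assms(1)] .
  have c: "l div p^j = hh p * R p (k-j)" if "j \<le> k" for j
    using divR[OF p0 hl, of "k-j" j] that assms(4) by simp
  have "\<And>j. j < k+1 \<Longrightarrow> Xc p k l j = (if j < 0 then 1 else 0)"
    unfolding Xc_def using c by simp
  from XX_from[OF this] have X: "(\<Sum>j<k+1. p^(k-j) * Xc p k l j) = 0" by simp
  have "\<And>j. j < k \<Longrightarrow> Ec p (l div p^j) (k-j) = hh p"
    using c Ec_mult p0 hl by simp
  from YY_const[OF this] X show ?thesis by simp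
qed

lemma case_a:
  assumes "odd p" "3 \<le> p" "1 \<le> k"
  shows "(\<Sum>j<k+1. p^(k-j) * Xc p k 0 j) = p * R p k \<and> (\<Sum>j<k. p^(k-j-1) * Ec p (0 div p^j) (k-j)) = 0"
proof -
  have p0: "0 < p" using assms by simp
  have "\<And>j. j < k+1 \<Longrightarrow> Xc p k 0 j = (if j < k then 1 else 0)"
    unfolding Xc_def using hh_pos[OF assms(1,2)] R_pos[OF _ p0] by auto
  from XX_from[OF this] have X: "(\<Sum>j<k+1. p^(k-j) * Xc p k 0 j) = p * R p k" by simp
  show ?thesis using X by (simp add: Ec_0)
qed


lemma case_c:
  assumes "odd p" "3 \<le> p" "1 \<le> k" "l < p^k" "1 \<le> t" "t \<le> p - 1" "t \<noteq> hh p"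
    "t * p^(k-1) \<le> l" "l \<le> t * R p k"
  shows "(\<Sum>j<k+1. p^(k-j) * Xc p k l j) = (if t < hh p then p * R p k else 0)
    \<and> (\<Sum>j<k. p^(k-j-1) * Ec p (l div p^j) (k-j)) = t * R p k"
proof -
  have p0: "0 < p" using assms by simp
  have bnd: "t * p^(k-j-1) \<le> l div p^j \<and> l div p^j \<le> t * R p (k-j)" if j: "j < k" for j
  proof
    have "t * p^(k-1) = (t * p^(k-j-1)) * p^j" using j by (simp add: mult.assoc flip: power_add)
    hence le: "(t * p^(k-j-1)) * p^j \<le> l" using assms(8) by linarith
    show "t * p^(k-j-1) \<le> l div p^j" by (rule div_ge[OF le]) (simp add: p0)
    have "(t * R p k) div p^j = t * R p (k-j)" using divR[OF p0 assms(6), of "k-j" j] j by simp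
    thus "l div p^j \<le> t * R p (k-j)" using div_le_mono[OF assms(9), of "p^j"] by simp
  qed
  have ki: "(t-1) * R p (k-j) < t * p^(k-j-1)" if "j < k" for j
    using KI[OF assms(5), of p "k-j"] assms(6) that by simp
  have E: "\<And>j. j < k \<Longrightarrow> Ec p (l div p^j) (k-j) = t"
  proof -
    fix j assume j: "j < k"
    show "Ec p (l div p^j) (k-j) = t"
      using Ec_val[OF assms(5), of p "k-j" "l div p^j"] bnd[OF j] ki[OF j] assms(6) by linarith
  qed
  have X: "\<And>j. j < k+1 \<Longrightarrow> Xc p k l j = (if j < (if t < hh p then k else 0) then 1 else 0)"
  proof -
    fix j assume j: "j < k+1"
    show "Xc p k l j = (if j < (if t < hh p then k else 0) then 1 else 0)"
    proof (cases "j = k")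
      case True thus ?thesis using Xc_k[OF assms(4)] by simp
    next
      case False
      hence jk: "j < k" using j by simp
      have Rp: "0 < R p (k-j)" using R_pos jk p0 by simp
      show ?thesis
      proof (cases "t < hh p")
        case True
        have "t * R p (k-j) < hh p * R p (k-j)" using True Rp by simp
        hence "l div p^j < hh p * R p (k-j)" using bnd[OF jk] by linarith
        thus ?thesis using True jk unfolding Xc_def by simp
      next
        case False
        hence "hh p \<le> t - 1" using assms(7) by simp
        hence "hh p * R p (k-j) \<le> (t-1) * R p (k-j)" by (intro mult_right_mono) auto
        hence "\<not> l div p^j < hh p * R p (k-j)" using bnd[OF jk] ki[OF jk] by linarith
        thus ?thesis using False unfolding Xc_def by simp
      qed
    qed
  qed
  have XX: "(\<Sum>j<k+1. p^(k-j) * Xc p k l j) = (if t < hh p then p * R p k else 0)"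
    using XX_from[OF X] by (cases "t < hh p") auto
  show ?thesis using XX YY_const[OF E] by simp
qed


lemma R_ge_pow: "1 \<le> m \<Longrightarrow> p^(m-1) \<le> R p m"
  by (cases m) (auto simp: R_Suc)

lemma case_d:
  assumes "odd p" "3 \<le> p" "1 \<le> k" "l < p^k" "1 \<le> ip" "ip \<le> k - 1"
    "hh p * (p^ip * R p (k-ip)) \<le> l" "l < hh p * (p^(ip-1) * R p (k-ip+1))"
  shows "(\<Sum>j<k+1. p^(k-j) * Xc p k l j) = p^(k+1-ip) * R p ip
    \<and> (\<Sum>j<k. p^(k-j-1) * Ec p (l div p^j) (k-j)) = hh p * R p k"
proof -
  have p0: "0 < p" using assms by simp
  have hl: "hh p \<le> p - 1" using hh_le[OF assms(1)] .
  have h1: "1 \<le> hh p" using hh_pos[OF assms(1,2)] .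
  define A where "A = hh p * R p (k-ip)"
  have ipk: "ip < k" using assms(3,6) by linarith
  have RA: "1 \<le> R p (k-ip)" using R_pos[of "k-ip" p] ipk p0 by simp
  have up: "hh p * (p^(ip-1) * R p (k-ip+1)) = A * p^ip + hh p * p^(ip-1)"
  proof -
    have "R p (k-ip+1) = p * R p (k-ip) + 1" using R_Suc' by simp
    moreover have "p^ip = p * p^(ip-1)" using assms(5) by (cases ip) auto
    ultimately show ?thesis unfolding A_def by (simp add: algebra_simps)
  qed
  have lo: "A * p^ip \<le> l" using assms(7) unfolding A_def by (simp add: algebra_simps)
  have hi: "l < A * p^ip + hh p * p^(ip-1)" using assms(8) up by simp
  have ldiv: "l div p^ip = A"
  proof (rule div_nat_eqI)
    show "p^ip * A \<le> l" using lo by (simp add: mult.commute)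
    have "hh p * p^(ip-1) \<le> p * p^(ip-1)" using hl by (intro mult_right_mono) auto
    also have "\<dots> = p^ip" using assms(5) by (cases ip) auto
    finally show "l < p^ip * Suc A" using hi by (simp add: algebra_simps)
  qed
  have cge: "l div p^j = hh p * R p (k-j)" if j: "ip \<le> j" "j \<le> k" for j
  proof -
    have "p^j = p^ip * p^(j-ip)" using j by (simp flip: power_add)
    hence "l div p^j = A div p^(j-ip)" using ldiv by (simp add: div_mult2_eq)
    also have "\<dots> = hh p * R p (k-j)" unfolding A_def using divR[OF p0 hl, of "k-j" "j-ip"] j by simp
    finally show ?thesis .
  qed
  have clt: "(hh p - 1) * R p (k-j) < l div p^j \<and> l div p^j < hh p * R p (k-j)" if j: "j < ip" for j
  proof -
    define m where "m = ip - j"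
    have m1: "1 \<le> m" unfolding m_def using j by simp
    have pj: "p^ip = p^m * p^j" unfolding m_def using j by (simp flip: power_add)
    have pj1: "p^(ip-1) = p^(m-1) * p^j" unfolding m_def using j by (simp flip: power_add)
    have Rk: "R p (k-j) = R p (k-ip) * p^m + R p m"
      using R_add[of p "k-ip" m] assms j unfolding m_def by simp
    have c1: "A * p^m \<le> l div p^j"
      using div_ge[of "A * p^m" "p^j" l] lo pj p0 by (simp add: mult.assoc)
    have c2: "l div p^j < A * p^m + hh p * p^(m-1)"
    proof (rule less_mult_imp_div_less)
      show "l < (A * p^m + hh p * p^(m-1)) * p^j" using hi pj pj1 by (simp add: algebra_simps)
    qed
    have e1: "hh p * R p (k-j) = A * p^m + hh p * R p m" unfolding A_def Rk by (simp add: algebra_simps)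
    have e2: "hh p * p^(m-1) \<le> hh p * R p m" using R_ge_pow[OF m1] by simp
    have e3: "(hh p - 1) * R p (k-j) = (hh p - 1) * R p (k-ip) * p^m + (hh p - 1) * R p m"
      unfolding Rk by (simp add: algebra_simps)
    have e4: "(hh p - 1) * R p m < p^m" using tR_lt[of p "hh p - 1" m] hl p0 by simp
    have e5: "((hh p - 1) * R p (k-ip) + 1) * p^m \<le> A * p^m"
    proof (intro mult_right_mono)
      obtain h' where "hh p = Suc h'" using h1 by (cases "hh p") auto
    thus "(hh p - 1) * R p (k-ip) + 1 \<le> A" unfolding A_def using RA by simp
    qed simp
    have "(hh p - 1) * R p (k-j) < A * p^m" using e3 e4 e5 by (simp add: algebra_simps)
    thus ?thesis using c1 c2 e1 e2 by linarith
  qed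
  have X: "\<And>j. j < k+1 \<Longrightarrow> Xc p k l j = (if j < ip then 1 else 0)"
  proof -
    fix j assume j: "j < k+1"
    show "Xc p k l j = (if j < ip then 1 else 0)"
    proof (cases "j < ip")
      case True thus ?thesis using clt[OF True] unfolding Xc_def by simp
    next
      case False thus ?thesis using cge[of j] j unfolding Xc_def by simp
    qed
  qed
  have E: "\<And>j. j < k \<Longrightarrow> Ec p (l div p^j) (k-j) = hh p"
  proof -
    fix j assume j: "j < k"
    show "Ec p (l div p^j) (k-j) = hh p"
    proof (cases "j < ip")
      case True thus ?thesis using clt[OF True] Ec_val[OF h1, of p "k-j" "l div p^j"] hl by simp
    next
      case False thus ?thesis using cge[of j] j Ec_mult[of "k-j" p "hh p"] p0 hl by simp
    qed
  qed
  show ?thesis using XX_from[OF X] YY_const[OF E] assms by simp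
qed


lemma case_b:
  assumes "odd p" "3 \<le> p" "l < p^k" "i + 2 \<le> k" "1 \<le> t" "t \<le> p - 1"
    "(t-1) * (p^i * R p (k-i)) + p^i \<le> l" "l < (t-1) * (p^(i+1) * R p (k-i-1)) + p^(i+1)"
  shows "(\<Sum>j<k+1. p^(k-j) * Xc p k l j) = (if t \<le> hh p then p * R p k else 0)
    \<and> (\<Sum>j<k. p^(k-j-1) * Ec p (l div p^j) (k-j)) + R p (k-1-i) = t * R p k"
proof -
  have p0: "0 < p" using assms by simp
  define R' where "R' = R p (k-i-1)"
  define Z where "Z = (t-1) * R'"
  have R'1: "1 \<le> R'" unfolding R'_def using R_pos[of "k-i-1" p] assms p0 by simp
  have Rki: "R p (k-i) = p * R' + 1" unfolding R'_def using R_Suc'[of p "k-i-1"] assms(4)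
    by (metis Suc_diff_Suc add_2_eq_Suc' diff_Suc_1 le_add2 less_le_trans Suc_le_lessD le_less_trans nat_less_le)
  have pi1: "p^(i+1) = p * p^i" by simp
  have lo': "Z * p^(i+1) + t * p^i \<le> l"
  proof -
    have "(t-1) * (p^i * R p (k-i)) + p^i = Z * p^(i+1) + ((t-1) + 1) * p^i"
      unfolding Rki Z_def pi1 by (simp add: algebra_simps)
    thus ?thesis using assms(7) assms(5) by simp
  qed
  have hi': "l < (Z + 1) * p^(i+1)" using assms(8) unfolding Z_def R'_def by (simp add: algebra_simps)
  have ldiv: "l div p^(i+1) = Z"
    by (rule div_nat_eqI) (use lo' hi' in \<open>auto simp: algebra_simps\<close>)
  have big: "l div p^j = (t-1) * R p (k-j)" if j: "i < j" "j < k" for j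
  proof -
    have jj: "(i+1)+(j-i-1) = j" using j by simp
    have "p^((i+1)+(j-i-1)) = p^(i+1) * p^(j-i-1)" by (rule power_add)
    hence "p^j = p^(i+1) * p^(j-i-1)" unfolding jj .
    hence "l div p^j = Z div p^(j-i-1)" using ldiv by (simp add: div_mult2_eq)
    also have "\<dots> = (t-1) * R p (k-j)" unfolding Z_def R'_def
      using divR[OF p0, of "t-1" "k-j" "j-i-1"] assms(6) j by simp
    finally show ?thesis .
  qed
  have small: "(t-1) * R p (k-j) < l div p^j \<and> l div p^j < t * R p (k-j)" if j: "j \<le> i" for j
  proof -
    define m where "m = i - j"
    have pj: "p^i = p^m * p^j" unfolding m_def using j by (simp flip: power_add)
    have pj1: "p^(i+1) = p^(m+1) * p^j" unfolding m_def using j by (simp flip: power_add)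
    have Rk1: "R p (k-j) = R p (k-i) * p^m + R p m" using R_add[of p "k-i" m] assms(4) j unfolding m_def by simp
    have kj: "(k-i-1) + (m+1) = k - j" unfolding m_def using j assms(4) by simp
    have Rk2: "R p (k-j) = R' * p^(m+1) + R p (m+1)" using R_add[of p "k-i-1" "m+1"] unfolding kj R'_def .
    have c1: "((t-1) * R p (k-i) + 1) * p^m \<le> l div p^j"
    proof (rule div_ge)
      show "((t-1) * R p (k-i) + 1) * p^m * p^j \<le> l" using assms(7) pj by (simp add: algebra_simps)
    qed (simp add: p0)
    have c2: "l div p^j < (Z + 1) * p^(m+1)"
    proof (rule less_mult_imp_div_less)
      have "(Z + 1) * p^(m+1) * p^j = (Z+1) * p^(i+1)" unfolding pj1 by (rule mult.assoc)
      thus "l < (Z + 1) * p^(m+1) * p^j" using hi' by simp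
    qed
    have e1: "(t-1) * R p (k-j) < ((t-1) * R p (k-i) + 1) * p^m"
    proof -
      have "(t-1) * R p m < p^m" using tR_lt[of p "t-1" m] assms(6) p0 by simp
      thus ?thesis unfolding Rk1 by (simp add: algebra_simps)
    qed
    have e2: "(Z + 1) * p^(m+1) \<le> t * R p (k-j)"
    proof -
      have "(Z + 1) * p^(m+1) \<le> (Z + R') * p^(m+1)" using R'1 by (intro mult_right_mono) auto
      also have "Z + R' = t * R'" unfolding Z_def using assms(5) by (cases t) auto
      also have "t * R' * p^(m+1) \<le> t * R p (k-j)" unfolding Rk2 by (simp add: algebra_simps)
      finally show ?thesis .
    qed
    show ?thesis using c1 c2 e1 e2 by linarith
  qed
  have X: "\<And>j. j < k+1 \<Longrightarrow> Xc p k l j = (if j < (if t \<le> hh p then k else 0) then 1 else 0)"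
  proof -
    fix j assume j: "j < k+1"
    show "Xc p k l j = (if j < (if t \<le> hh p then k else 0) then 1 else 0)"
    proof (cases "j = k")
      case True thus ?thesis using Xc_k[OF assms(3)] by simp
    next
      case False
      hence jk: "j < k" using j by simp
      have Rp: "0 < R p (k-j)" using R_pos jk p0 by simp
      have bnd: "(t-1) * R p (k-j) \<le> l div p^j \<and> (l div p^j < hh p * R p (k-j) \<longleftrightarrow> t \<le> hh p)"
      proof (cases "j \<le> i")
        case True
        note sm = small[OF True]
        show ?thesis
        proof (cases "t \<le> hh p")
          case True
          hence "t * R p (k-j) \<le> hh p * R p (k-j)" by (intro mult_right_mono) auto
          hence "l div p^j < hh p * R p (k-j)" using sm by linarith
          thus ?thesis using sm True by simp
        next
          case False
          hence "hh p * R p (k-j) \<le> (t-1) * R p (k-j)" by (intro mult_right_mono) auto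
          hence "\<not> l div p^j < hh p * R p (k-j)" using sm by linarith
          thus ?thesis using sm False by simp
        qed
      next
        case False
        hence "l div p^j = (t-1) * R p (k-j)" using big jk by simp
        thus ?thesis using Rp assms(5) by auto
      qed
      thus ?thesis using jk unfolding Xc_def by auto
    qed
  qed
  have XX: "(\<Sum>j<k+1. p^(k-j) * Xc p k l j) = (if t \<le> hh p then p * R p k else 0)"
    using XX_from[OF X] assms(4) by (cases "t \<le> hh p") auto
  have E: "\<And>j. j < k \<Longrightarrow> Ec p (l div p^j) (k-j) = t - (if i < j then 1 else 0)"
  proof -
    fix j assume jk: "j < k"
    show "Ec p (l div p^j) (k-j) = t - (if i < j then 1 else 0)"
    proof (cases "i < j")
      case True
      thus ?thesis using big[OF True jk] Ec_mult[of "k-j" p "t-1"] jk p0 assms(6) by simp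
    next
      case False
      thus ?thesis using small[of j] Ec_val[OF assms(5), of p "k-j" "l div p^j"] assms(6) by simp
    qed
  qed
  have "(\<Sum>j<k. p^(k-j-1) * Ec p (l div p^j) (k-j)) + (\<Sum>j<k. p^(k-j-1) * (if i < j then 1 else 0))
      = (\<Sum>j<k. t * p^(k-j-1))"
    unfolding sum.distrib[symmetric] using E assms(5) by (intro sum.cong refl) (auto simp: algebra_simps)
  hence "(\<Sum>j<k. p^(k-j-1) * Ec p (l div p^j) (k-j)) + R p (k-1-i) = t * R p k"
    using YYsum_b[of i k p] sum_pow_rev2[of p k] assms(4) by (simp add: sum_distrib_left[symmetric])
  thus ?thesis using XX by simp
qed


lemma fin_d:
  fixes h C S P R1 Pk Rk1 X :: int
  assumes "R1 = P*S + 1" "Pk = (P-1)*S + 1" "2*h = P - 1" "S = P*Rk1 + 1"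
  shows "h*(C + 2 - 2*R1 + 2*X + 2*(h*S)) = h*(C - Pk - 2*(P*Rk1) + 2*X - 1)"
  using assms by algebra

theorem mainTheorem7:
  fixes p k l :: nat
  assumes "prime p" and "odd p" and "2 \<le> k" and "l < p^k"
  defines "M \<equiv> int (fibM p k (Vv (k + 2) l))"
    and "S \<equiv> (\<Sum>j\<in>{0..k-1}. int p ^ j)"
    and "C \<equiv> 2 * (int k + 1) * int p ^ (k + 1) - 1"
    and "h \<equiv> (int p - 1) div 2"
  shows
   "(l = 0 \<longrightarrow> M = h * C)
  \<and> (\<forall>i t. i \<le> k - 2 \<and> 1 \<le> t \<and> t \<le> p - 1
        \<and> (int t - 1) * (\<Sum>\<iota>\<in>{i..k-1}. int p ^ \<iota>) + int p ^ i \<le> int l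
        \<and> int l \<le> (int t - 1) * (\<Sum>\<iota>\<in>{i+1..k-1}. int p ^ \<iota>) + int p ^ (i + 1) - 1
      \<longrightarrow> (2 * int t \<le> int p - 1 \<longrightarrow>
             M = h * (C + 2 * int t * S - 2 * (\<Sum>\<mu>\<in>{0..k-i-2}. int p ^ \<mu>)))
        \<and> (int p + 1 \<le> 2 * int t \<and> t \<le> p - 1 \<longrightarrow>
             M = h * (C + (2 * int t - 2 * int p) * S - 2 * (\<Sum>\<mu>\<in>{0..k-i-2}. int p ^ \<mu>))))
  \<and> (\<forall>t. 1 \<le> t \<and> t \<le> p - 1 \<and> 2 * int t \<noteq> int p - 1
        \<and> int t * int p ^ (k - 1) \<le> int l \<and> int l \<le> int t * S
      \<longrightarrow> (2 * int t \<le> int p - 3 \<longrightarrow> M = h * (C + 2 * int t * S))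
        \<and> (int p + 1 \<le> 2 * int t \<and> t \<le> p - 1 \<longrightarrow> M = h * (C + (2 * int t - 2 * int p) * S)))
  \<and> (\<forall>i'. 1 \<le> i' \<and> i' \<le> k - 1
        \<and> h * (\<Sum>\<iota>\<in>{i'..k-1}. int p ^ \<iota>) \<le> int l
        \<and> int l \<le> h * (\<Sum>\<iota>\<in>{i'-1..k-1}. int p ^ \<iota>) - 1
      \<longrightarrow> M = h * (C - int p ^ k - 2 * (\<Sum>\<theta>\<in>{1..k-1}. int p ^ \<theta>)
                   + 2 * (\<Sum>\<mu>\<in>{k-i'+1..k}. int p ^ \<mu>) - 1))
  \<and> (int l = h * S \<longrightarrow> M = h * (C - int p ^ k - 2 * (\<Sum>\<theta>\<in>{1..k-1}. int p ^ \<theta>) - 1))"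
proof -
  have p3: "3 \<le> p"
  proof -
    have "2 \<le> p" using prime_ge_2_nat[OF assms(1)] .
    moreover have "p \<noteq> 2" using assms(2) by auto
    ultimately show ?thesis by simp
  qed
  have p0: "0 < p" "1 \<le> p" using p3 by auto
  have k1: "1 \<le> k" using assms(3) by simp
  define XX where "XX = (\<Sum>j<k+1. p^(k-j) * Xc p k l j)"
  define YY where "YY = (\<Sum>j<k. p^(k-j-1) * Ec p (l div p^j) (k-j))"
  have hh_int: "h = int (hh p)" unfolding h_def hh_def using p0 by (simp add: zdiv_int of_nat_diff)
  have S_int: "S = int (R p k)" unfolding S_def sum_ivl_int using k1 by simp
  have h2: "2 * h = int p - 1" unfolding hh_int using hh2[OF assms(2)] p0 by simp
  have RS: "int (R p (k+1)) = int p * S + 1" unfolding S_int using R_Suc'[of p k] by simp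
  have PS: "int p ^ k = (int p - 1) * S + 1"
  proof -
    have "int ((p-1) * R p k + 1) = int (p^k)" using R_geom[OF p0(2), of k] by simp
    thus ?thesis unfolding S_int using p0 by (simp add: of_nat_diff)
  qed
  have MM: "M = h * (C + 2 - 2 * int (R p (k+1)) + 2 * int XX + 2 * int YY)"
    unfolding M_def C_def hh_int XX_def YY_def using master[OF assms(2) p3 k1 assms(4)] by simp
  have tle: "\<And>t. (2 * int t \<le> int p - 1) \<longleftrightarrow> t \<le> hh p"
    using hh2[OF assms(2)] p0 by (auto simp: of_nat_diff)
  show ?thesis
  proof (intro conjI allI impI)
    assume l0: "l = 0"
    have "XX = p * R p k" "YY = 0" using case_a[OF assms(2) p3 k1] l0 unfolding XX_def YY_def by auto
    thus "M = h * C" unfolding MM RS S_int by (simp add: algebra_simps)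
  next
    fix i t
    assume H: "i \<le> k - 2 \<and> 1 \<le> t \<and> t \<le> p - 1
        \<and> (int t - 1) * (\<Sum>\<iota>\<in>{i..k-1}. int p ^ \<iota>) + int p ^ i \<le> int l
        \<and> int l \<le> (int t - 1) * (\<Sum>\<iota>\<in>{i+1..k-1}. int p ^ \<iota>) + int p ^ (i + 1) - 1"
    have i2: "i + 2 \<le> k" using H assms(3) by linarith
    have t1: "int t - 1 = int (t-1)" using H by (simp add: of_nat_diff)
    have s1: "(\<Sum>\<iota>\<in>{i..k-1}. int p ^ \<iota>) = int (p^i * R p (k-i))" unfolding sum_ivl_int using i2 by simp
    have s2: "(\<Sum>\<iota>\<in>{i+1..k-1}. int p ^ \<iota>) = int (p^(i+1) * R p (k-i-1))" unfolding sum_ivl_int using i2 by simp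
    have s3: "(\<Sum>\<mu>\<in>{0..k-i-2}. int p ^ \<mu>) = int (R p (k-1-i))" unfolding sum_ivl_int using i2
      by (simp add: Suc_diff_Suc numeral_2_eq_2)
    have lo: "(t-1) * (p^i * R p (k-i)) + p^i \<le> l"
      using H unfolding t1 s1 by (simp flip: of_nat_mult of_nat_add of_nat_power)
    have hi: "l < (t-1) * (p^(i+1) * R p (k-i-1)) + p^(i+1)"
      using H unfolding t1 s2 by (simp flip: of_nat_mult of_nat_add of_nat_power)
    note cb = case_b[OF assms(2) p3 assms(4) i2 _ _ lo hi]
    have Y: "int YY = int t * S - int (R p (k-1-i))"
    proof -
      have "YY + R p (k-1-i) = t * R p k" using cb H unfolding YY_def by simp
      hence "int YY + int (R p (k-1-i)) = int t * int (R p k)" by (metis of_nat_add of_nat_mult)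
      thus ?thesis unfolding S_int by linarith
    qed
    {
      assume "2 * int t \<le> int p - 1"
      hence "t \<le> hh p" using tle[of t] by linarith
      hence "XX = p * R p k" using cb H unfolding XX_def by simp
      thus "M = h * (C + 2 * int t * S - 2 * (\<Sum>\<mu>\<in>{0..k-i-2}. int p ^ \<mu>))"
        unfolding MM RS Y s3 S_int by (simp add: algebra_simps)
    }
    {
      assume "int p + 1 \<le> 2 * int t \<and> t \<le> p - 1"
      hence "\<not> t \<le> hh p" using tle[of t] by linarith
      hence "XX = 0" using cb H unfolding XX_def by simp
      thus "M = h * (C + (2 * int t - 2 * int p) * S - 2 * (\<Sum>\<mu>\<in>{0..k-i-2}. int p ^ \<mu>))"
        unfolding MM RS Y s3 by (simp add: algebra_simps)
    }
  next
    fix t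
    assume H: "1 \<le> t \<and> t \<le> p - 1 \<and> 2 * int t \<noteq> int p - 1
        \<and> int t * int p ^ (k - 1) \<le> int l \<and> int l \<le> int t * S"
    have tn: "t \<noteq> hh p" using H hh2[OF assms(2)] p0 by (auto simp: of_nat_diff)
    have lo: "t * p^(k-1) \<le> l" using H by (simp flip: of_nat_mult of_nat_power)
    have hi: "l \<le> t * R p k" using H unfolding S_int by (simp flip: of_nat_mult)
    note cc = case_c[OF assms(2) p3 k1 assms(4) _ _ tn lo hi]
    have Y: "YY = t * R p k" using cc H unfolding YY_def by simp
    {
      assume "2 * int t \<le> int p - 3"
      hence "t < hh p" using hh2[OF assms(2)] p0 by (auto simp: of_nat_diff)
      hence "XX = p * R p k" using cc H unfolding XX_def by simp
      thus "M = h * (C + 2 * int t * S)" unfolding MM RS Y S_int by (simp add: algebra_simps)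
    }
    {
      assume "int p + 1 \<le> 2 * int t \<and> t \<le> p - 1"
      hence "\<not> t < hh p" using tle[of t] by linarith
      hence "XX = 0" using cc H unfolding XX_def by simp
      thus "M = h * (C + (2 * int t - 2 * int p) * S)" unfolding MM RS Y S_int by (simp add: algebra_simps)
    }
  next
    fix i'
    assume H: "1 \<le> i' \<and> i' \<le> k - 1
        \<and> h * (\<Sum>\<iota>\<in>{i'..k-1}. int p ^ \<iota>) \<le> int l
        \<and> int l \<le> h * (\<Sum>\<iota>\<in>{i'-1..k-1}. int p ^ \<iota>) - 1"
    have s1: "(\<Sum>\<iota>\<in>{i'..k-1}. int p ^ \<iota>) = int (p^i' * R p (k-i'))" unfolding sum_ivl_int using H k1 by simp
    have s2: "(\<Sum>\<iota>\<in>{i'-1..k-1}. int p ^ \<iota>) = int (p^(i'-1) * R p (k-i'+1))"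
    proof -
      have ik: "i' \<le> k" "1 \<le> i'" using H by auto
      hence "Suc (k-1) - (i'-1) = k-i'+1" by simp
      thus ?thesis unfolding sum_ivl_int by simp
    qed
    have s3: "(\<Sum>\<theta>\<in>{1..k-1}. int p ^ \<theta>) = int (p * R p (k-1))" unfolding sum_ivl_int using k1 by simp
    have s4: "(\<Sum>\<mu>\<in>{k-i'+1..k}. int p ^ \<mu>) = int (p^(k+1-i') * R p i')"
    proof -
      have ik: "i' \<le> k" "1 \<le> i'" using H by auto
      hence "Suc k - (k-i'+1) = i'" "k-i'+1 = k+1-i'" by simp_all
      thus ?thesis unfolding sum_ivl_int by simp
    qed
    have lo: "hh p * (p^i' * R p (k-i')) \<le> l" using H unfolding s1 hh_int by (simp flip: of_nat_mult)
    have hi: "l < hh p * (p^(i'-1) * R p (k-i'+1))" using H unfolding s2 hh_int by (simp flip: of_nat_mult)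
    note cd = case_d[OF assms(2) p3 k1 assms(4) _ _ lo hi]
    have X: "XX = p^(k+1-i') * R p i'" and Y: "YY = hh p * R p k" using cd H unfolding XX_def YY_def by auto
    have Rk: "S = int p * int (R p (k-1)) + 1" unfolding S_int using R_Suc'[of p "k-1"] k1 by simp
    show "M = h * (C - int p ^ k - 2 * (\<Sum>\<theta>\<in>{1..k-1}. int p ^ \<theta>)
                   + 2 * (\<Sum>\<mu>\<in>{k-i'+1..k}. int p ^ \<mu>) - 1)"
      unfolding MM s3 s4 X Y of_nat_mult hh_int[symmetric] S_int[symmetric]
      by (rule fin_d[OF RS PS h2 Rk])
  next
    assume H: "int l = h * S"
    have le: "l = hh p * R p k" using H unfolding hh_int S_int by (simp flip: of_nat_mult)
    have X: "XX = 0" and Y: "YY = hh p * R p k" using case_e[OF assms(2) p3 k1 le] unfolding XX_def YY_def by auto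
    have s3: "(\<Sum>\<theta>\<in>{1..k-1}. int p ^ \<theta>) = int (p * R p (k-1))" unfolding sum_ivl_int using k1 by simp
    have Rk: "S = int p * int (R p (k-1)) + 1" unfolding S_int using R_Suc'[of p "k-1"] k1 by simp
    show "M = h * (C - int p ^ k - 2 * (\<Sum>\<theta>\<in>{1..k-1}. int p ^ \<theta>) - 1)"
      using fin_d[OF RS PS h2 Rk, of C 0] unfolding MM s3 X Y of_nat_mult hh_int[symmetric] S_int[symmetric]
      by simp
  qed
qed


end
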